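(* In the Gaussian first-order bifurcating autoregressive model described below, let $(b_n)$ be an increasing sequence of positive reals with $b_n/\sqrt n\to+\infty$ and $b_n/\sqrt{n\log n}\to0$. Then $\hat\theta^r$ converges $\frac{b_{|\mathbb T_r|}^2}{|\mathbb T_r|}$-superexponentially fast in probability to $\theta$: for every $\delta>0$, $$\limsup_{r\to\infty}\frac{|\mathbb T_r|}{b_{|\mathbb T_r|}^2}\log\mathbb P\big(\|\hat\theta^r-\theta\|>\delta\big)=-\infty.$$
   Context: Let $\mathbb T=\mathbb N^*$ (vertex $n$ has daughters $2n,2n+1$), $\mathbb G_r=\{2^r,\dots,2^{r+1}-1\}$, $\mathbb T_r=\bigcup_{q=0}^r\mathbb G_q$, $|\mathbb T_r|=2^{r+1}-1$. The model: $\mathcal L(X_1)=\nu$, a probability on $\mathbb R$ with finite moments of all orders, and for $n\ge1$, $X_{2n}=\alpha_0X_n+\beta_0+\varepsilon_{2n}$, $X_{2n+1}=\alpha_1X_n+\beta_1+\varepsilon_{2n+1}$, where $\alpha_0,\alpha_1\in(-1,1)$, $\beta_0,\beta_1\in\mathbb R$, and $((\varepsilon_{2n},\varepsilon_{2n+1}))_{n\ge1}$ are i.i.d. $\mathcal N_2(0,\Gamma)$, independent of $X_1$, with $\Gamma=\sigma^2\begin{pmatrix}1&\rho\\\rho&1\end{pmatrix}$, $\sigma^2>0$, $\rho\in(-1,1)$. Let $\theta=(\alpha_0,\beta_0,\alpha_1,\beta_1)$. Observing $(X_i)_{i\in\mathbb T_{r+1}}$, the least squares estimator $\hat\theta^r=(\hat\alpha^r_0,\hat\beta^r_0,\hat\alpha^r_1,\hat\beta^r_1)$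 is, for $\eta\in\{0,1\}$, $$\hat\alpha^r_\eta=\frac{|\mathbb T_r|^{-1}\sum_{i\in\mathbb T_r}X_iX_{2i+\eta}-\big(|\mathbb T_r|^{-1}\sum_{i\in\mathbb T_r}X_i\big)\big(|\mathbb T_r|^{-1}\sum_{i\in\mathbb T_r}X_{2i+\eta}\big)}{|\mathbb T_r|^{-1}\sum_{i\in\mathbb T_r}X_i^2-\big(|\mathbb T_r|^{-1}\sum_{i\in\mathbb T_r}X_i\big)^2},\quad \hat\beta^r_\eta=|\mathbb T_r|^{-1}\sum_{i\in\mathbb T_r}X_{2i+\eta}-\hat\alpha^r_\eta|\mathbb T_r|^{-1}\sum_{i\in\mathbb T_r}X_i.$$ *)

theory Defs
  imports "HOL-Probability.Probability"
begin

text \<open>The subtree T_r = G_0 \<union> ... \<union> G_r = {1, ..., 2^(r+1) - 1} of the binary tree N*.\<close>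
definition Tset :: "nat \<Rightarrow> nat set" where
  "Tset r = {1..<2^(r+1)}"

definition tavg :: "nat \<Rightarrow> (nat \<Rightarrow> real) \<Rightarrow> real" where
  "tavg r f = (\<Sum>i\<in>Tset r. f i) / real (card (Tset r))"

text \<open>Least squares estimators computed from the observed values x i, i in T_(r+1).\<close>
definition hat_alpha :: "nat \<Rightarrow> nat \<Rightarrow> (nat \<Rightarrow> real) \<Rightarrow> real" where
  "hat_alpha eta r x =
     (tavg r (\<lambda>i. x i * x (2*i + eta)) - tavg r x * tavg r (\<lambda>i. x (2*i + eta)))
     / (tavg r (\<lambda>i. (x i)^2) - (tavg r x)^2)"

definition hat_beta :: "nat \<Rightarrow> nat \<Rightarrow> (nat \<Rightarrow> real) \<Rightarrow> real" where
  "hat_beta eta r x = tavg r (\<lambda>i. x (2*i + eta)) - hat_alpha eta r x * tavg r x"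

definition hat_theta :: "nat \<Rightarrow> (nat \<Rightarrow> real) \<Rightarrow> real \<times> real \<times> real \<times> real" where
  "hat_theta r x = (hat_alpha 0 r x, hat_beta 0 r x, hat_alpha 1 r x, hat_beta 1 r x)"

text \<open>Density of the centred bivariate normal N_2(0, Gamma), Gamma = s2 [[1, rho],[rho, 1]].\<close>
definition binormal_density :: "real \<Rightarrow> real \<Rightarrow> real \<times> real \<Rightarrow> real" where
  "binormal_density s2 rho p =
     exp (- ((fst p)^2 - 2 * rho * (fst p) * (snd p) + (snd p)^2) / (2 * s2 * (1 - rho^2)))
     / (2 * pi * s2 * sqrt (1 - rho^2))"

definition eln :: "real \<Rightarrow> ereal" where
  "eln p = (if p = 0 then -\<infinity> else ereal (ln p))"

end

theory Submission
  imports Defs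
begin


lemma integrable_prod_fun:
  fixes f h :: "real \<Rightarrow> real"
  assumes f: "integrable lborel f" and h: "integrable lborel h"
  shows "integrable (lborel \<Otimes>\<^sub>M lborel) (\<lambda>p. f (fst p) * h (snd p))"
proof -
  interpret L: sigma_finite_measure "lborel::real measure" by (rule sigma_finite_lborel)
  have fm[measurable]: "f \<in> borel_measurable borel" and hm[measurable]: "h \<in> borel_measurable borel"
    using f h by auto
  have "(\<integral>\<^sup>+p. ennreal (norm (f (fst p) * h (snd p))) \<partial>(lborel \<Otimes>\<^sub>M lborel))
      = (\<integral>\<^sup>+x. \<integral>\<^sup>+y. ennreal (norm (f x)) * ennreal (norm (h y)) \<partial>lborel \<partial>lborel)"
    by (subst sigma_finite_measure.nn_integral_fst[OF sigma_finite_lborel, symmetric]) (auto simp: abs_mult ennreal_mult)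
  also have "\<dots> = (\<integral>\<^sup>+x. ennreal (norm (f x)) * (\<integral>\<^sup>+y. ennreal (norm (h y)) \<partial>lborel) \<partial>lborel)"
    by (subst nn_integral_cmult) auto
  also have "\<dots> = (\<integral>\<^sup>+x. ennreal (norm (f x)) \<partial>lborel) * (\<integral>\<^sup>+y. ennreal (norm (h y)) \<partial>lborel)"
    by (subst nn_integral_multc) auto
  also have "\<dots> < \<infinity>"
    using f h by (simp add: integrable_iff_bounded ennreal_mult_less_top)
  finally show ?thesis
    by (subst integrable_iff_bounded) auto
qed



lemma gauss_1d:
  assumes c: "c > 0"
  shows "integrable lborel (\<lambda>x::real. exp (- c * x^2) * x^k)"
proof -
  define \<sigma> where "\<sigma> = sqrt (1/(2*c))"
  have s2: "\<sigma>^2 = 1/(2*c)" using c by (simp add: \<sigma>_def)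
  have s0: "\<sigma> > 0" using c by (simp add: \<sigma>_def)
  have eq: "exp (- c * x^2) * x^k = sqrt (2*pi*\<sigma>^2) * (normal_density 0 \<sigma> x * (x - 0)^k)" for x
  proof -
    have "- ((x - 0)^2) / (2 * \<sigma>^2) = - c * x^2" using s2 c by simp
    moreover have "sqrt (2*pi*\<sigma>^2) > 0" using s0 by simp
    ultimately show ?thesis unfolding normal_density_def using s0 by simp
  qed
  show ?thesis
    unfolding eq apply (intro integrable_mult_right integrable_normal_moment) using s0 by auto
qed

lemma fst_bm[measurable]: "(fst :: real \<times> real \<Rightarrow> real) \<in> borel_measurable borel"
  unfolding borel_prod[symmetric] by measurable
lemma snd_bm[measurable]: "(snd :: real \<times> real \<Rightarrow> real) \<in> borel_measurable borel"
  unfolding borel_prod[symmetric] by measurable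

lemma binormal_measurable[measurable]: "binormal_density s r \<in> borel_measurable borel"
  unfolding binormal_density_def by measurable

lemma binormal_pos:
  assumes "s > 0" "\<bar>r\<bar> < 1"
  shows "binormal_density s r p > 0"
proof -
  have "r^2 < 1" using assms by (simp add: abs_square_less_1)
  then show ?thesis using assms unfolding binormal_density_def by auto
qed

lemma binormal_bound:
  assumes s: "s > 0" and r: "\<bar>r\<bar> < 1"
  defines "A \<equiv> 1 / (2 * pi * s * sqrt (1 - r^2))"
  defines "c \<equiv> (1 - \<bar>r\<bar>) / (2 * s * (1 - r^2))"
  shows "binormal_density s r p \<le> A * exp (- c * (fst p)^2) * exp (- c * (snd p)^2)"
proof -
  obtain x y where p: "p = (x,y)" by (cases p)
  have r2: "r^2 < 1" using r by (simp add: abs_square_less_1)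
  have d: "2 * s * (1 - r^2) > 0" using s r2 by auto
  have q: "(1 - \<bar>r\<bar>) * (x^2 + y^2) \<le> x^2 - 2*r*x*y + y^2"
  proof -
    have "2*\<bar>x\<bar>*\<bar>y\<bar> \<le> \<bar>x\<bar>^2+\<bar>y\<bar>^2" by (rule sum_squares_bound)
    then have h: "2*\<bar>x*y\<bar> \<le> x^2+y^2" by (simp add: abs_mult)
    have "\<bar>r\<bar> * (2*\<bar>x*y\<bar>) \<le> \<bar>r\<bar> * (x^2+y^2)" using h by (simp add: mult_left_mono)
    moreover have "2*r*x*y \<le> \<bar>r\<bar> * (2*\<bar>x*y\<bar>)"
    proof -
      have "2*r*x*y \<le> \<bar>2*r*x*y\<bar>" by simp
      also have "\<dots> = \<bar>r\<bar> * (2*\<bar>x*y\<bar>)" by (simp add: abs_mult)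
      finally show ?thesis .
    qed
    moreover have "(1 - \<bar>r\<bar>) * (x^2 + y^2) = (x^2+y^2) - \<bar>r\<bar> * (x^2+y^2)" by (simp add: algebra_simps)
    ultimately show ?thesis by linarith
  qed
  have "- (x^2 - 2*r*x*y + y^2) / (2 * s * (1 - r^2)) \<le> - c * x^2 + - c * y^2"
  proof -
    have "- c * x^2 + - c * y^2 = - (c * (x^2 + y^2))" by (simp add: algebra_simps)
    also have "c * (x^2 + y^2) = ((1 - \<bar>r\<bar>) * (x^2 + y^2)) / (2 * s * (1 - r^2))" by (simp add: c_def)
    finally have "- c * x^2 + - c * y^2 = - ((1 - \<bar>r\<bar>) * (x^2 + y^2)) / (2 * s * (1 - r^2))" by simp
    also have "\<dots> \<ge> - (x^2 - 2*r*x*y + y^2) / (2 * s * (1 - r^2))"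
      unfolding minus_divide_left[symmetric] using q d by (intro le_imp_neg_le divide_right_mono) auto
    finally show ?thesis .
  qed
  then have e: "exp (- (x^2 - 2*r*x*y + y^2) / (2 * s * (1 - r^2))) \<le> exp (- c * x^2) * exp (- c * y^2)"
    by (simp add: exp_add[symmetric])
  have A0: "A > 0" unfolding A_def using s r2 by auto
  have "binormal_density s r p = A * exp (- (x^2 - 2*r*x*y + y^2) / (2 * s * (1 - r^2)))"
    unfolding binormal_density_def A_def p by simp
  also have "\<dots> \<le> A * (exp (- c * x^2) * exp (- c * y^2))"
    using e A0 by (simp add: mult_left_mono)
  finally show ?thesis by (simp add: p mult.assoc)
qed

lemma binormal_integrable_sq:
  assumes s: "s > 0" and r: "\<bar>r\<bar> < 1"
  shows "integrable lborel (\<lambda>p. binormal_density s r p * (fst p)^2)"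
    and "integrable lborel (\<lambda>p. binormal_density s r p * (snd p)^2)"
proof -
  define A where "A = 1 / (2 * pi * s * sqrt (1 - r^2))"
  define c where "c = (1 - \<bar>r\<bar>) / (2 * s * (1 - r^2))"
  have r2: "r^2 < 1" using r by (simp add: abs_square_less_1)
  have c0: "c > 0" unfolding c_def using s r r2 by auto
  have A0: "A > 0" unfolding A_def using s r2 by auto
  have bd: "binormal_density s r p \<le> A * exp (- c * (fst p)^2) * exp (- c * (snd p)^2)" for p
    using binormal_bound[OF s r] unfolding A_def c_def by blast
  have pos: "binormal_density s r p > 0" for p using binormal_pos[OF s r] .
  have i1: "integrable (lborel \<Otimes>\<^sub>M lborel) (\<lambda>p. (A * (exp (- c * (fst p)^2) * (fst p)^2)) * (exp (- c * (snd p)^2) * (snd p)^0))"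
    by (intro integrable_prod_fun integrable_mult_right gauss_1d c0)
  have i2: "integrable (lborel \<Otimes>\<^sub>M lborel) (\<lambda>p. (A * (exp (- c * (fst p)^2) * (fst p)^0)) * (exp (- c * (snd p)^2) * (snd p)^2))"
    by (intro integrable_prod_fun integrable_mult_right gauss_1d c0)
  show "integrable lborel (\<lambda>p. binormal_density s r p * (fst p)^2)"
  proof (rule Bochner_Integration.integrable_bound[OF i1[unfolded lborel_prod]])
    show "AE p in lborel. norm (binormal_density s r p * (fst p)^2) \<le> norm ((A * (exp (- c * (fst p)^2) * (fst p)^2)) * (exp (- c * (snd p)^2) * (snd p)^0))"
    proof (intro AE_I2)
      fix p :: "real \<times> real"
      have "binormal_density s r p * (fst p)^2 \<le> A * exp (- c * (fst p)^2) * exp (- c * (snd p)^2) * (fst p)^2"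
        using bd[of p] by (simp add: mult_right_mono)
      then show "norm (binormal_density s r p * (fst p)^2) \<le> norm ((A * (exp (- c * (fst p)^2) * (fst p)^2)) * (exp (- c * (snd p)^2) * (snd p)^0))"
        using pos[of p] A0 by (simp add: abs_mult mult_ac)
    qed
  qed measurable
  show "integrable lborel (\<lambda>p. binormal_density s r p * (snd p)^2)"
  proof (rule Bochner_Integration.integrable_bound[OF i2[unfolded lborel_prod]])
    show "AE p in lborel. norm (binormal_density s r p * (snd p)^2) \<le> norm ((A * (exp (- c * (fst p)^2) * (fst p)^0)) * (exp (- c * (snd p)^2) * (snd p)^2))"
    proof (intro AE_I2)
      fix p :: "real \<times> real"
      have "binormal_density s r p * (snd p)^2 \<le> A * exp (- c * (fst p)^2) * exp (- c * (snd p)^2) * (snd p)^2"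
        using bd[of p] by (simp add: mult_right_mono)
      then show "norm (binormal_density s r p * (snd p)^2) \<le> norm ((A * (exp (- c * (fst p)^2) * (fst p)^0)) * (exp (- c * (snd p)^2) * (snd p)^2))"
        using pos[of p] A0 by (simp add: abs_mult mult_ac)
    qed
  qed measurable
qed

lemma binormal_sym: "binormal_density s r (- p) = binormal_density s r p"
  unfolding binormal_density_def by simp

lemma lborel_uminus_pair: "distr lborel borel uminus = (lborel :: (real \<times> real) measure)"
  by (subst lborel_affine[of "-1" 0]) (auto simp: density_1 one_ennreal_def[symmetric])

lemma binormal_mean0:
  "(\<integral>p. binormal_density s r p * fst p \<partial>lborel) = 0"
  "(\<integral>p. binormal_density s r p * snd p \<partial>lborel) = 0"
proof -
  have "(\<integral>p. binormal_density s r p * fst p \<partial>lborel) = (\<integral>p. binormal_density s r p * fst p \<partial>(distr lborel borel uminus))"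
    by (simp add: lborel_uminus_pair)
  also have "\<dots> = (\<integral>p. binormal_density s r (-p) * fst (-p) \<partial>lborel)"
    by (subst integral_distr) auto
  also have "\<dots> = - (\<integral>p. binormal_density s r p * fst p \<partial>lborel)"
    by (simp add: binormal_sym)
  finally show "(\<integral>p. binormal_density s r p * fst p \<partial>lborel) = 0" by simp
  have "(\<integral>p. binormal_density s r p * snd p \<partial>lborel) = (\<integral>p. binormal_density s r p * snd p \<partial>(distr lborel borel uminus))"
    by (simp add: lborel_uminus_pair)
  also have "\<dots> = (\<integral>p. binormal_density s r (-p) * snd (-p) \<partial>lborel)"
    by (subst integral_distr) auto
  also have "\<dots> = - (\<integral>p. binormal_density s r p * snd p \<partial>lborel)"
    by (simp add: binormal_sym)
  finally show "(\<integral>p. binormal_density s r p * snd p \<partial>lborel) = 0" by simp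
qed



lemma card_Tset: "card (Tset r) = 2^(r+1) - 1"
  by (simp add: Tset_def)

lemma card_Tset_pos: "card (Tset r) \<ge> 1"
proof -
  have "(1::nat) \<le> 2^r" by simp
  then have "(2::nat) \<le> 2^(r+1)" by simp
  then show ?thesis unfolding card_Tset by linarith
qed

lemma Tset_pos: "i \<in> Tset r \<Longrightarrow> i \<ge> 1" by (simp add: Tset_def)
lemma Tset_fin: "finite (Tset r)" by (simp add: Tset_def)

lemma D1:
  fixes x :: "nat \<Rightarrow> real" and a b :: real and r \<eta> :: nat
  defines "T \<equiv> Tset r"
  defines "n \<equiv> real (card T)"
  defines "e \<equiv> (\<lambda>i. x (2*i+\<eta>) - a * x i - b)"
  defines "S \<equiv> (\<Sum>i\<in>T. x i)" and "Q \<equiv> (\<Sum>i\<in>T. (x i)^2)" and "E \<equiv> (\<Sum>i\<in>T. e i)" and "P \<equiv> (\<Sum>i\<in>T. x i * e i)"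
  defines "V \<equiv> Q / n - (S / n)^2"
  assumes V: "V \<noteq> 0"
  shows "hat_alpha \<eta> r x = a + (P / n - (S / n) * (E / n)) / V"
    and "hat_beta \<eta> r x = b + E / n - (hat_alpha \<eta> r x - a) * (S / n)"
proof -
  have n: "n > 0" using card_Tset_pos[of r] by (simp add: n_def T_def)
  have h1: "(\<Sum>i\<in>T. x i * x (2*i+\<eta>)) = a * Q + b * S + P"
  proof -
    have "(\<Sum>i\<in>T. x i * x (2*i+\<eta>)) = (\<Sum>i\<in>T. a * (x i)^2 + b * x i + x i * e i)"
      by (intro sum.cong refl) (simp add: e_def algebra_simps power2_eq_square)
    also have "\<dots> = a * Q + b * S + P"
      by (simp add: sum.distrib sum_distrib_left Q_def S_def P_def)
    finally show ?thesis .
  qed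
  have h2: "(\<Sum>i\<in>T. x (2*i+\<eta>)) = a * S + b * n + E"
  proof -
    have "(\<Sum>i\<in>T. x (2*i+\<eta>)) = (\<Sum>i\<in>T. a * x i + b + e i)"
      by (intro sum.cong refl) (simp add: e_def)
    also have "\<dots> = a * S + b * n + E"
      by (simp add: sum.distrib sum_distrib_left S_def E_def n_def)
    finally show ?thesis .
  qed
  have dv: "(c1 * Q + c2 * S + c3 * P) / n = c1 * (Q/n) + c2 * (S/n) + c3 * (P/n)" for c1 c2 c3
    by (simp add: add_divide_distrib)
  have ta1: "tavg r (\<lambda>i. x i * x (2*i+\<eta>)) = a * (Q/n) + b * (S/n) + P/n"
    unfolding tavg_def using h1 dv[of a b 1] by (simp add: T_def n_def)
  have ta2: "tavg r (\<lambda>i. x (2*i+\<eta>)) = a * (S/n) + b + E/n"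
  proof -
    have "(a * S + b * n + E) / n = a * (S/n) + b * (n/n) + E/n" by (simp add: add_divide_distrib)
    then show ?thesis unfolding tavg_def using h2 n by (simp add: T_def n_def)
  qed
  have ta3: "tavg r x = S / n" unfolding tavg_def by (simp add: T_def n_def S_def)
  have ta4: "tavg r (\<lambda>i. (x i)^2) = Q / n" unfolding tavg_def by (simp add: T_def n_def Q_def)
  have num: "a * (Q/n) + b * (S/n) + P/n - (S / n) * (a * (S/n) + b + E/n) = a * V + (P / n - (S / n) * (E / n))"
    unfolding V_def by (simp add: algebra_simps power2_eq_square)
  show A: "hat_alpha \<eta> r x = a + (P / n - (S / n) * (E / n)) / V"
    unfolding hat_alpha_def ta1 ta2 ta3 ta4 num V_def[symmetric] using V by (simp add: add_divide_distrib)
  show "hat_beta \<eta> r x = b + E / n - (hat_alpha \<eta> r x - a) * (S / n)"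
    unfolding hat_beta_def ta2 ta3 by (simp add: algebra_simps)
qed

lemma D1b:
  fixes x :: "nat \<Rightarrow> real" and a b u L v :: real and r \<eta> :: nat
  defines "T \<equiv> Tset r"
  defines "n \<equiv> real (card T)"
  defines "e \<equiv> (\<lambda>i. x (2*i+\<eta>) - a * x i - b)"
  defines "S \<equiv> (\<Sum>i\<in>T. x i)" and "Q \<equiv> (\<Sum>i\<in>T. (x i)^2)"
  defines "V \<equiv> Q / n - (S / n)^2"
  assumes V: "V \<ge> v" and v: "v > 0" and u: "u > 0"
    and E: "\<bar>\<Sum>i\<in>T. e i\<bar> < u * n" and P: "\<bar>\<Sum>i\<in>T. x i * e i\<bar> < u * n" and SL: "\<bar>S\<bar> < L * n"
  shows "\<bar>hat_alpha \<eta> r x - a\<bar> \<le> (u + L * u) / v"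
    and "\<bar>hat_beta \<eta> r x - b\<bar> \<le> u + L * ((u + L * u) / v)"
proof -
  have n: "n > 0" using card_Tset_pos[of r] by (simp add: n_def T_def)
  define E' where "E' = (\<Sum>i\<in>T. e i)"
  define P' where "P' = (\<Sum>i\<in>T. x i * e i)"
  have V0: "V \<noteq> 0" using V v by simp
  have F: "hat_alpha \<eta> r x = a + (P' / n - (S / n) * (E' / n)) / V"
    "hat_beta \<eta> r x = b + E' / n - (hat_alpha \<eta> r x - a) * (S / n)"
    using D1[where r=r and x=x and \<eta>=\<eta> and a=a and b=b] V0
    unfolding V_def Q_def S_def n_def T_def E'_def P'_def e_def by blast+
  have En: "\<bar>E' / n\<bar> \<le> u" using E n by (simp add: E'_def abs_divide divide_le_eq less_imp_le)
  have Pn: "\<bar>P' / n\<bar> \<le> u" using P n by (simp add: P'_def abs_divide divide_le_eq less_imp_le)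
  have Sn: "\<bar>S / n\<bar> \<le> L" using SL n by (simp add: abs_divide divide_le_eq less_imp_le)
  have L0: "L \<ge> 0"
  proof (rule ccontr)
    assume "\<not> L \<ge> 0" then have "L * n < 0" using n by (simp add: mult_neg_pos)
    then show False using SL by linarith
  qed
  have num: "\<bar>P' / n - (S / n) * (E' / n)\<bar> \<le> u + L * u"
  proof -
    have "\<bar>(S / n) * (E' / n)\<bar> \<le> L * u" unfolding abs_mult using Sn En L0 by (intro mult_mono) auto
    then show ?thesis using Pn by linarith
  qed
  have "\<bar>hat_alpha \<eta> r x - a\<bar> = \<bar>P' / n - (S / n) * (E' / n)\<bar> / V"
    using F(1) V v by (simp add: abs_divide)
  also have "\<dots> \<le> (u + L * u) / V" using num V v by (simp add: divide_right_mono)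
  also have "\<dots> \<le> (u + L * u) / v" using V v u L0 by (intro divide_left_mono) auto
  finally show A: "\<bar>hat_alpha \<eta> r x - a\<bar> \<le> (u + L * u) / v" .
  have "\<bar>hat_beta \<eta> r x - b\<bar> = \<bar>E' / n - (hat_alpha \<eta> r x - a) * (S / n)\<bar>" using F(2) by simp
  also have "\<dots> \<le> \<bar>E' / n\<bar> + \<bar>hat_alpha \<eta> r x - a\<bar> * \<bar>S / n\<bar>" using abs_triangle_ineq4[of "E' / n" "(hat_alpha \<eta> r x - a) * (S / n)"] by (simp only: abs_mult)
  also have "\<dots> \<le> u + ((u + L * u) / v) * L" using En A Sn by (intro add_mono mult_mono) auto
  finally show "\<bar>hat_beta \<eta> r x - b\<bar> \<le> u + L * ((u + L * u) / v)" by (simp add: mult.commute)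
qed



lemma card_rel: "real (card (Tset (k+1))) = 2 * real (card (Tset k)) + 1"
proof -
  define p :: nat where "p = 2^(k+1)"
  have p1: "1 \<le> p" by (simp add: p_def)
  have p2: "(2::nat)^(k+2) = 2 * p" by (simp add: p_def)
  have "2 * p - 1 = 2 * (p - 1) + 1" using p1 by arith
  then have "(2::nat)^(k+2) - 1 = 2 * (2^(k+1) - 1) + 1" using p2 by (simp add: p_def)
  then have "card (Tset (k+1)) = 2 * card (Tset k) + 1" by (simp add: card_Tset)
  then show ?thesis by simp
qed

lemma img_Tset: "(\<lambda>i. 2*i) ` Tset k \<subseteq> Tset (k+1)"
  by (auto simp: Tset_def)

lemma D2:
  fixes x :: "nat \<Rightarrow> real" and aa bb :: real and k :: nat
  defines "T \<equiv> Tset (k+1)" and "T' \<equiv> Tset k"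
  defines "n \<equiv> real (card T)"
  defines "S \<equiv> (\<Sum>i\<in>T. x i)" and "Q \<equiv> (\<Sum>i\<in>T. (x i)^2)"
  defines "d \<equiv> (\<lambda>i. x (2*i) - aa * x i - bb)"
  shows "n * (Q / n - (S / n)^2) \<ge> (\<Sum>i\<in>T'. min ((d i)^2) 1) + 2 * aa * (\<Sum>i\<in>T'. x i * d i) + 2 * (bb - S / n) * (\<Sum>i\<in>T'. d i)"
proof -
  have n: "n > 0" using card_Tset_pos[of "k+1"] by (simp add: n_def T_def)
  define m where "m = S / n"
  have Sm: "S = n * m" using n by (simp add: m_def)
  have a: "n * (Q / n - m^2) = (\<Sum>i\<in>T. (x i - m)^2)"
  proof -
    have "(\<Sum>i\<in>T. (x i - m)^2) = (\<Sum>i\<in>T. (x i)^2 - 2 * m * x i + m^2)"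
      by (intro sum.cong refl) (simp add: power2_eq_square algebra_simps)
    also have "\<dots> = Q - 2 * m * S + n * m^2"
      by (simp add: sum.distrib sum_subtractf sum_distrib_left Q_def S_def n_def)
    also have "\<dots> = n * (Q / n - m^2)" using n Sm by (simp add: algebra_simps power2_eq_square)
    finally show ?thesis by simp
  qed
  have b: "(\<Sum>i\<in>T'. (x (2*i) - m)^2) \<le> (\<Sum>i\<in>T. (x i - m)^2)"
  proof -
    have inj: "inj_on (\<lambda>i::nat. 2*i) T'" by (auto simp: inj_on_def)
    have "(\<Sum>i\<in>T'. (x (2*i) - m)^2) = (\<Sum>j\<in>(\<lambda>i. 2*i) ` T'. (x j - m)^2)"
      by (simp add: sum.reindex[OF inj])
    also have "\<dots> \<le> (\<Sum>i\<in>T. (x i - m)^2)"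
      using img_Tset[of k] by (intro sum_mono2) (auto simp: T_def T'_def Tset_fin)
    finally show ?thesis .
  qed
  have c: "(x (2*i) - m)^2 \<ge> min ((d i)^2) 1 + 2 * (aa * x i + bb - m) * d i" for i
  proof -
    have e: "x (2*i) - m = (aa * x i + bb - m) + d i" by (simp add: d_def)
    have "(x (2*i) - m)^2 = ((aa * x i + bb - m) + d i)^2" by (simp only: e)
    also have "\<dots> = (aa * x i + bb - m)^2 + (d i)^2 + 2 * (aa * x i + bb - m) * d i" by (rule power2_sum)
    finally have "(x (2*i) - m)^2 = (aa * x i + bb - m)^2 + 2 * (aa * x i + bb - m) * d i + (d i)^2" by simp
    moreover have "min ((d i)^2) 1 \<le> (d i)^2" by simp
    moreover have "0 \<le> (aa * x i + bb - m)^2" by simp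
    ultimately show ?thesis by linarith
  qed
  have "(\<Sum>i\<in>T'. min ((d i)^2) 1) + 2 * aa * (\<Sum>i\<in>T'. x i * d i) + 2 * (bb - m) * (\<Sum>i\<in>T'. d i)
      = (\<Sum>i\<in>T'. min ((d i)^2) 1 + 2 * (aa * x i + bb - m) * d i)"
  proof -
    have "(\<Sum>i\<in>T'. min ((d i)^2) 1 + 2 * (aa * x i + bb - m) * d i)
        = (\<Sum>i\<in>T'. min ((d i)^2) 1 + (2 * aa) * (x i * d i) + (2 * (bb - m)) * d i)"
      by (intro sum.cong refl) (simp add: algebra_simps)
    also have "\<dots> = (\<Sum>i\<in>T'. min ((d i)^2) 1) + (2 * aa) * (\<Sum>i\<in>T'. x i * d i) + (2 * (bb - m)) * (\<Sum>i\<in>T'. d i)"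
      by (simp add: sum.distrib sum_distrib_left)
    finally show ?thesis by simp
  qed
  also have "\<dots> \<le> (\<Sum>i\<in>T'. (x (2*i) - m)^2)" by (intro sum_mono c)
  also have "\<dots> \<le> n * (Q / n - m^2)" using a b by simp
  finally show ?thesis by (simp add: m_def)
qed



lemma norm4_le: "norm ((p, q, r, t) :: real \<times> real \<times> real \<times> real) \<le> \<bar>p\<bar> + \<bar>q\<bar> + \<bar>r\<bar> + \<bar>t\<bar>"
proof -
  have "norm (p, q, r, t) \<le> norm p + norm (q, r, t)" by (rule norm_Pair_le)
  also have "norm (q, r, t) \<le> norm q + norm (r, t)" by (rule norm_Pair_le)
  also have "norm (r, t) \<le> norm r + norm t" by (rule norm_Pair_le)
  finally show ?thesis by simp
qed

lemma D3:
  fixes x :: "nat \<Rightarrow> real" and aa bb cc dd u L mu :: real and k :: nat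
  defines "T \<equiv> Tset (k+1)" and "T' \<equiv> Tset k"
  defines "n \<equiv> real (card T)" and "n' \<equiv> real (card T')"
  defines "d0 \<equiv> (\<lambda>i. x (2*i) - aa * x i - bb)" and "d1 \<equiv> (\<lambda>i. x (2*i+1) - cc * x i - dd)"
  assumes aa: "\<bar>aa\<bar> < 1" and mu: "mu > 0" and u: "u > 0"
    and E0: "\<bar>\<Sum>i\<in>T. d0 i\<bar> < u * n" and E1: "\<bar>\<Sum>i\<in>T. d1 i\<bar> < u * n"
    and P0: "\<bar>\<Sum>i\<in>T. x i * d0 i\<bar> < u * n" and P1: "\<bar>\<Sum>i\<in>T. x i * d1 i\<bar> < u * n"
    and SL: "\<bar>\<Sum>i\<in>T. x i\<bar> < L * n"
    and E0': "\<bar>\<Sum>i\<in>T'. d0 i\<bar> < u * n'" and P0': "\<bar>\<Sum>i\<in>T'. x i * d0 i\<bar> < u * n'"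
    and Yb: "(\<Sum>i\<in>T'. min ((d0 i)^2) 1) > n' * mu / 2"
    and cond: "2 * u + 2 * (\<bar>bb\<bar> + L) * u \<le> mu / 4"
  shows "norm (hat_theta (k+1) x - (aa, bb, cc, dd))
      \<le> 2 * ((u + L * u) / (mu / 12)) + 2 * (u + L * ((u + L * u) / (mu / 12)))"
proof -
  have n: "n > 0" using card_Tset_pos[of "k+1"] by (simp add: n_def T_def)
  have n': "n' \<ge> 1" using card_Tset_pos[of k] by (simp add: n'_def T'_def)
  have nn: "n = 2 * n' + 1" using card_rel[of k] by (simp add: n_def n'_def T_def T'_def)
  define S where "S = (\<Sum>i\<in>T. x i)"
  define Q where "Q = (\<Sum>i\<in>T. (x i)^2)"
  define V where "V = Q / n - (S / n)^2"
  have L0: "L \<ge> 0"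
  proof (rule ccontr)
    assume "\<not> L \<ge> 0" then have "L * n < 0" using n by (simp add: mult_neg_pos)
    then show False using SL by linarith
  qed
  have m: "\<bar>S / n\<bar> \<le> L" using SL n by (simp add: S_def abs_divide divide_le_eq less_imp_le)
  have D2': "n * V \<ge> (\<Sum>i\<in>T'. min ((d0 i)^2) 1) + 2 * aa * (\<Sum>i\<in>T'. x i * d0 i) + 2 * (bb - S / n) * (\<Sum>i\<in>T'. d0 i)"
    using D2[where k=k and x=x and aa=aa and bb=bb] unfolding V_def S_def Q_def n_def T_def T'_def d0_def by simp
  have t1: "\<bar>2 * aa * (\<Sum>i\<in>T'. x i * d0 i)\<bar> \<le> 2 * u * n'"
  proof -
    have "\<bar>aa\<bar> * \<bar>\<Sum>i\<in>T'. x i * d0 i\<bar> \<le> 1 * (u * n')"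
      using aa P0' by (intro mult_mono) auto
    then show ?thesis by (simp add: abs_mult)
  qed
  have t2: "\<bar>2 * (bb - S / n) * (\<Sum>i\<in>T'. d0 i)\<bar> \<le> 2 * ((\<bar>bb\<bar> + L) * (u * n'))"
  proof -
    have bm: "\<bar>bb - S / n\<bar> \<le> \<bar>bb\<bar> + L" using m abs_triangle_ineq4[of bb "S / n"] by linarith
    have "\<bar>bb - S / n\<bar> * \<bar>\<Sum>i\<in>T'. d0 i\<bar> \<le> (\<bar>bb\<bar> + L) * (u * n')"
      using bm E0' L0 by (intro mult_mono) auto
    moreover have "\<bar>2 * (bb - S / n) * (\<Sum>i\<in>T'. d0 i)\<bar> = 2 * (\<bar>bb - S / n\<bar> * \<bar>\<Sum>i\<in>T'. d0 i\<bar>)"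
      by (simp only: abs_mult mult.assoc abs_numeral)
    ultimately show ?thesis by linarith
  qed
  have "n * V \<ge> n' * mu / 2 - 2 * u * n' - 2 * ((\<bar>bb\<bar> + L) * (u * n'))"
    using D2' t1 t2 Yb by linarith
  also have "n' * mu / 2 - 2 * u * n' - 2 * ((\<bar>bb\<bar> + L) * (u * n')) = n' * (mu / 2 - (2 * u + 2 * (\<bar>bb\<bar> + L) * u))"
    by (simp add: algebra_simps)
  also have "\<dots> \<ge> n' * (mu / 4)" using cond n' by (intro mult_left_mono) auto
  finally have nV: "n * V \<ge> n' * (mu / 4)" .
  have V: "V \<ge> mu / 12"
  proof -
    have "n * (mu / 12) \<le> n' * (mu / 4)" using nn n' mu by (simp add: field_simps)
    then have "n * (mu / 12) \<le> n * V" using nV by linarith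
    then show ?thesis using n by simp
  qed
  have v: "mu / 12 > 0" using mu by simp
  have R0: "\<bar>hat_alpha 0 (k+1) x - aa\<bar> \<le> (u + L * u) / (mu / 12)"
     "\<bar>hat_beta 0 (k+1) x - bb\<bar> \<le> u + L * ((u + L * u) / (mu / 12))"
    using D1b[where r="k+1" and x=x and \<eta>=0 and a=aa and b=bb and u=u and L=L and v="mu/12"] V v u E0 P0 SL
    unfolding V_def Q_def S_def n_def T_def d0_def by auto
  have R1: "\<bar>hat_alpha 1 (k+1) x - cc\<bar> \<le> (u + L * u) / (mu / 12)"
     "\<bar>hat_beta 1 (k+1) x - dd\<bar> \<le> u + L * ((u + L * u) / (mu / 12))"
    using D1b[where r="k+1" and x=x and \<eta>=1 and a=cc and b=dd and u=u and L=L and v="mu/12"] V v u E1 P1 SL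
    unfolding V_def Q_def S_def n_def T_def d1_def by auto
  have "norm (hat_theta (k+1) x - (aa, bb, cc, dd))
      \<le> \<bar>hat_alpha 0 (k+1) x - aa\<bar> + \<bar>hat_beta 0 (k+1) x - bb\<bar> + \<bar>hat_alpha 1 (k+1) x - cc\<bar> + \<bar>hat_beta 1 (k+1) x - dd\<bar>"
    unfolding hat_theta_def using norm4_le by simp
  moreover define A where "A = (u + L * u) / (mu / 12)"
  moreover define B where "B = u + L * A"
  ultimately have "norm (hat_theta (k+1) x - (aa, bb, cc, dd)) \<le> 2 * A + 2 * B"
    using R0[folded A_def, folded B_def] R1[folded A_def, folded B_def] by linarith
  then show ?thesis by (simp add: A_def B_def)
qed



lemma lin5: "(a::real) \<le> w \<Longrightarrow> g \<le> z \<Longrightarrow> w \<le> z \<Longrightarrow> t \<le> s \<Longrightarrow> s \<le> r \<Longrightarrow> 2*a + 2*(t + g) \<le> 2*z + 2*(r + z)"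
  by (simp add: algebra_simps)

lemma arith1:
  fixes q mu \<delta> :: real
  assumes q: "q \<ge> 1" and mu: "mu > 0" and d: "\<delta> > 0" and qd: "q \<ge> (96 / mu + 2) / \<delta>"
  shows "2 * ((1/q^3 + q * (1/q^3)) / (mu / 12)) + 2 * (1/q^3 + q * ((1/q^3 + q * (1/q^3)) / (mu / 12))) \<le> \<delta>"
proof -
  have q0: "q > 0" using q by simp
  have t3: "1/q^3 \<le> 1/q^2" using q by (intro divide_left_mono power_increasing) auto
  have t2: "1/q^2 \<le> 1/q" using q by (intro divide_left_mono) (auto simp: power2_eq_square)
  have e1: "q * (1/q^3) = 1/q^2" using q0 by (simp add: power2_eq_square power3_eq_cube)
  have e2: "q * (1/q^2) = 1/q" using q0 by (simp add: power2_eq_square)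
  have A: "(1/q^3 + q * (1/q^3)) / (mu / 12) \<le> 24 / mu * (1/q^2)"
  proof -
    have "1/q^3 + q * (1/q^3) \<le> 2 * (1/q^2)" using t3 e1 by simp
    then have "(1/q^3 + q * (1/q^3)) / (mu / 12) \<le> (2 * (1/q^2)) / (mu / 12)" by (rule divide_right_mono) (use mu in simp)
    also have "\<dots> = 24 / mu * (1/q^2)" by simp
    finally show ?thesis .
  qed
  have B: "q * ((1/q^3 + q * (1/q^3)) / (mu / 12)) \<le> 24 / mu * (1/q)"
  proof -
    have "q * ((1/q^3 + q * (1/q^3)) / (mu / 12)) \<le> q * (24 / mu * (1/q^2))" using A q0 by (intro mult_left_mono) auto
    also have "\<dots> = 24 / mu * (q * (1/q^2))" by simp
    also have "\<dots> = 24 / mu * (1/q)" using e2 by simp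
    finally show ?thesis .
  qed
  have C: "24 / mu * (1/q^2) \<le> 24 / mu * (1/q)" using t2 mu by (intro mult_left_mono) auto
  have "2 * ((1/q^3 + q * (1/q^3)) / (mu / 12)) + 2 * (1/q^3 + q * ((1/q^3 + q * (1/q^3)) / (mu / 12)))
      \<le> 2 * (24 / mu * (1/q)) + 2 * (1/q + 24 / mu * (1/q))"
    by (rule lin5[OF A B C t3 t2])
  also have "\<dots> = (96 / mu + 2) / q" by (simp add: add_divide_distrib algebra_simps)
  also have "\<dots> \<le> \<delta>" using qd q0 d by (simp add: divide_le_eq mult.commute)
  finally show ?thesis .
qed

lemma arith2:
  fixes q mu b :: real
  assumes q: "q \<ge> 1" and mu: "mu > 0" and qb: "q \<ge> (16 + 8 * \<bar>b\<bar>) / mu"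
  shows "2 * (1/q^3) + 2 * (\<bar>b\<bar> + q) * (1/q^3) \<le> mu / 4"
proof -
  have q0: "q > 0" using q by simp
  have t3: "1/q^3 \<le> 1/q" using q by (intro divide_left_mono) (auto simp: power3_eq_cube intro: order_trans[of _ q] mult_le_cancel_left1[THEN iffD2])
  have e1: "q * (1/q^3) = 1/q^2" using q0 by (simp add: power2_eq_square power3_eq_cube)
  have t2: "1/q^2 \<le> 1/q" using q by (intro divide_left_mono) (auto simp: power2_eq_square)
  have "2 * (1/q^3) + 2 * (\<bar>b\<bar> + q) * (1/q^3) = 2 * (1/q^3) + 2 * \<bar>b\<bar> * (1/q^3) + 2 * (q * (1/q^3))"
    by (simp add: algebra_simps)
  also have "\<dots> \<le> 2 * (1/q) + 2 * \<bar>b\<bar> * (1/q) + 2 * (1/q)"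
    using t3 t2 e1 by (intro add_mono mult_left_mono) auto
  also have "\<dots> = (4 + 2 * \<bar>b\<bar>) / q" by (simp add: add_divide_distrib)
  also have "\<dots> \<le> mu / 4"
  proof -
    have "(16 + 8 * \<bar>b\<bar>) \<le> q * mu" using qb mu by (simp add: divide_le_eq)
    then show ?thesis using q0 mu by (simp add: divide_le_eq field_simps)
  qed
  finally show ?thesis .
qed

lemma h1:
  fixes q N K :: real
  assumes q: "q \<ge> 1" and N: "N \<ge> q^8" and K: "K \<ge> 0"
  shows "N * K / ((1/q^3) * N)^2 \<le> K / q"
proof -
  have q0: "q > 0" using q by simp
  have N0: "N > 0" using N q0 by (smt (verit) zero_less_power)
  have "N * K / ((1/q^3) * N)^2 = K * q^6 / N" using N0 q0 by (simp add: field_simps power2_eq_square power_mult_distrib)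
  also have "\<dots> \<le> K * q^6 / q^8" using N q0 K N0 by (intro divide_left_mono mult_nonneg_nonneg mult_pos_pos) auto
  also have "\<dots> = K / q^2" using q0 by (simp add: field_simps power_def)
  also have "\<dots> \<le> K / q" using q K by (intro divide_left_mono) (auto simp: power2_eq_square)
  finally show ?thesis .
qed



definition Yv :: "(nat \<Rightarrow> 'a \<Rightarrow> real) \<Rightarrow> (nat \<Rightarrow> 'a \<Rightarrow> real) \<Rightarrow> nat \<Rightarrow> 'a \<Rightarrow> real \<times> real" where
  "Yv X eps n \<omega> = (if n = 0 then (X 1 \<omega>, 0) else (eps (2*n) \<omega>, eps (2*n+1) \<omega>))"

function Fx :: "real \<Rightarrow> real \<Rightarrow> real \<Rightarrow> real \<Rightarrow> nat \<Rightarrow> (nat \<Rightarrow> real \<times> real) \<Rightarrow> real" where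
  "Fx a0 b0 a1 b1 i v = (if i \<le> 1 then fst (v 0) else if even i
      then a0 * Fx a0 b0 a1 b1 (i div 2) v + b0 + fst (v (i div 2))
      else a1 * Fx a0 b0 a1 b1 (i div 2) v + b1 + snd (v (i div 2)))"
  by pat_completeness auto
termination by (relation "Wellfounded.measure (\<lambda>(_,_,_,_,i,_). i)") auto

declare Fx.simps[simp del]

definition past :: "(nat \<Rightarrow> 'a \<Rightarrow> real \<times> real) \<Rightarrow> nat \<Rightarrow> 'a \<Rightarrow> (nat \<Rightarrow> real \<times> real)" where
  "past Y j \<omega> = restrict (\<lambda>k. Y k \<omega>) {..<j}"

lemma Fx_restrict:
  assumes "i \<le> j" "1 \<le> j"
  shows "Fx a0 b0 a1 b1 i (restrict v {..<j}) = Fx a0 b0 a1 b1 i v"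
  using assms
proof (induction i rule: less_induct)
  case (less i)
  show ?case
  proof (cases "i \<le> 1")
    case True then show ?thesis using less.prems by (subst (1 2) Fx.simps) simp
  next
    case False
    then have "i div 2 < i" by simp
    with less.prems have "i div 2 < j" by linarith
    with less.IH[of "i div 2"] \<open>i div 2 < i\<close> less.prems show ?thesis
      by (subst (1 2) Fx.simps) (simp add: restrict_def)
  qed
qed

lemma Fx_measurable:
  assumes "i \<le> j" "1 \<le> j"
  shows "(\<lambda>v. Fx a0 b0 a1 b1 i v) \<in> borel_measurable (PiM {..<j} (\<lambda>_. lborel))"
  using assms
proof (induction i rule: less_induct)
  case (less i)
  have comp: "(\<lambda>v. v k) \<in> measurable (PiM {..<j} (\<lambda>_. lborel)) (borel :: (real\<times>real) measure)" if "k < j" for k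
    using measurable_component_singleton[of k "{..<j}" "\<lambda>_. lborel"] that by simp
  show ?case
  proof (cases "i \<le> 1")
    case True
    have "(\<lambda>v::nat \<Rightarrow> real\<times>real. fst (v 0)) \<in> borel_measurable (PiM {..<j} (\<lambda>_. lborel))"
    proof -
      have "0 < j" using less.prems by simp
      from measurable_compose[OF comp[OF this] fst_bm] show ?thesis by simp
    qed
    then show ?thesis using True by (subst Fx.simps) simp
  next
    case False
    then have "i div 2 < i" by simp
    with less.prems have lt: "i div 2 < j" by linarith
    have ih: "(\<lambda>v. Fx a0 b0 a1 b1 (i div 2) v) \<in> borel_measurable (PiM {..<j} (\<lambda>_. lborel))"
      using less.IH[of "i div 2"] \<open>i div 2 < i\<close> less.prems by simp
    have f: "(\<lambda>v::nat \<Rightarrow> real\<times>real. fst (v (i div 2))) \<in> borel_measurable (PiM {..<j} (\<lambda>_. lborel))"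
      using measurable_compose[OF comp[OF lt] fst_bm] by simp
    have s: "(\<lambda>v::nat \<Rightarrow> real\<times>real. snd (v (i div 2))) \<in> borel_measurable (PiM {..<j} (\<lambda>_. lborel))"
      using measurable_compose[OF comp[OF lt] snd_bm] by simp
    have "(\<lambda>v. if even i
      then a0 * Fx a0 b0 a1 b1 (i div 2) v + b0 + fst (v (i div 2))
      else a1 * Fx a0 b0 a1 b1 (i div 2) v + b1 + snd (v (i div 2))) \<in> borel_measurable (PiM {..<j} (\<lambda>_. lborel))"
      using ih f s by (cases "even i") auto
    then show ?thesis using False by (subst Fx.simps) simp
  qed
qed

locale bar = prob_space M for M :: "'a measure" +
  fixes X eps :: "nat \<Rightarrow> 'a \<Rightarrow> real" and a0 b0 a1 b1 sg rho :: real
  assumes Xm[measurable]: "\<And>n. X n \<in> borel_measurable M"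
    and epsm[measurable]: "\<And>n. eps n \<in> borel_measurable M"
    and X1int: "\<And>k::nat. integrable M (\<lambda>\<omega>. (X 1 \<omega>) ^ k)"
    and a0: "\<bar>a0\<bar> < 1" and a1: "\<bar>a1\<bar> < 1"
    and sg: "sg > 0" and rho: "\<bar>rho\<bar> < 1"
    and rec0: "\<And>n. n \<ge> 1 \<Longrightarrow> \<forall>\<omega>\<in>space M. X (2*n) \<omega> = a0 * X n \<omega> + b0 + eps (2*n) \<omega>"
    and rec1: "\<And>n. n \<ge> 1 \<Longrightarrow> \<forall>\<omega>\<in>space M. X (2*n+1) \<omega> = a1 * X n \<omega> + b1 + eps (2*n+1) \<omega>"
    and dist: "\<And>n. n \<ge> 1 \<Longrightarrow> distributed M lborel (\<lambda>\<omega>. (eps (2*n) \<omega>, eps (2*n+1) \<omega>))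
                 (\<lambda>p. ennreal (binormal_density (sg^2) rho p))"
    and ind: "indep_vars (\<lambda>_. lborel) (Yv X eps) UNIV"
begin

abbreviation "Y \<equiv> Yv X eps"
abbreviation "F \<equiv> Fx a0 b0 a1 b1"

lemma Y_meas[measurable]: "Y n \<in> measurable M borel"
  using ind unfolding indep_vars_def by simp

lemma X_F: "i \<ge> 1 \<Longrightarrow> \<omega> \<in> space M \<Longrightarrow> X i \<omega> = F i (\<lambda>k. Y k \<omega>)"
proof (induction i rule: less_induct)
  case (less i)
  show ?case
  proof (cases "i \<le> 1")
    case True then have "i = 1" using less.prems by simp
    then show ?thesis by (subst Fx.simps) (simp add: Yv_def)
  next
    case False
    define n where "n = i div 2"
    have n1: "n \<ge> 1" "n < i" using False by (auto simp: n_def)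
    have ih: "X n \<omega> = F n (\<lambda>k. Y k \<omega>)" using less.IH[OF n1(2) n1(1) less.prems(2)] .
    show ?thesis
    proof (cases "even i")
      case True
      then have i: "i = 2*n" by (simp add: n_def)
      show ?thesis using rec0[OF n1(1)] less.prems(2) True False n1 ih
        by (subst Fx.simps) (simp add: Yv_def i)
    next
      case False': False
      then have i: "i = 2*n+1" by (simp add: n_def)
      show ?thesis using rec1[OF n1(1)] less.prems(2) False' False n1 ih
        by (subst Fx.simps) (simp add: Yv_def i)
    qed
  qed
qed

lemma X_past: "1 \<le> i \<Longrightarrow> i \<le> j \<Longrightarrow> \<omega> \<in> space M \<Longrightarrow> X i \<omega> = F i (past Y j \<omega>)"
  unfolding past_def by (simp add: Fx_restrict X_F)

lemma past_meas[measurable]: "past Y j \<in> measurable M (PiM {..<j} (\<lambda>_. lborel))"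
  unfolding past_def by (intro measurable_restrict) simp

lemma indep_past: 
  assumes "j \<ge> 1"
  shows "indep_var (PiM {..<j} (\<lambda>_. lborel)) (past Y j) (PiM {j} (\<lambda>_. lborel)) (\<lambda>\<omega>. restrict (\<lambda>i. Y i \<omega>) {j})"
  unfolding past_def by (rule indep_var_restrict[OF ind]) auto

lemma indep_prod:
  fixes f :: "(nat \<Rightarrow> real \<times> real) \<Rightarrow> real" and h :: "real \<times> real \<Rightarrow> real"
  assumes j: "j \<ge> 1"
    and f[measurable]: "f \<in> borel_measurable (PiM {..<j} (\<lambda>_. lborel))"
    and h[measurable]: "h \<in> borel_measurable (borel :: (real\<times>real) measure)"
    and fi: "integrable M (\<lambda>\<omega>. f (past Y j \<omega>))"
    and hi: "integrable M (\<lambda>\<omega>. h (Y j \<omega>))"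
  shows "integrable M (\<lambda>\<omega>. f (past Y j \<omega>) * h (Y j \<omega>))"
    and "(\<integral>\<omega>. f (past Y j \<omega>) * h (Y j \<omega>) \<partial>M) = (\<integral>\<omega>. f (past Y j \<omega>) \<partial>M) * (\<integral>\<omega>. h (Y j \<omega>) \<partial>M)"
proof -
  have hc: "(\<lambda>v::nat \<Rightarrow> real\<times>real. h (v j)) \<in> borel_measurable (PiM {j} (\<lambda>_. lborel))"
  proof -
    have "(\<lambda>v. v j) \<in> measurable (PiM {j} (\<lambda>_. lborel)) (borel :: (real\<times>real) measure)"
      using measurable_component_singleton[of j "{j}" "\<lambda>_. lborel"] by simp
    from measurable_compose[OF this h] show ?thesis by simp
  qed
  have "indep_var borel (f \<circ> past Y j) borel ((\<lambda>v. h (v j)) \<circ> (\<lambda>\<omega>. restrict (\<lambda>i. Y i \<omega>) {j}))"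
    by (rule indep_var_compose[OF indep_past[OF j] f hc])
  then have iv: "indep_var borel (\<lambda>\<omega>. f (past Y j \<omega>)) borel (\<lambda>\<omega>. h (Y j \<omega>))" by (simp add: o_def)
  show "integrable M (\<lambda>\<omega>. f (past Y j \<omega>) * h (Y j \<omega>))"
    by (rule indep_var_integrable[OF iv fi hi])
  show "(\<integral>\<omega>. f (past Y j \<omega>) * h (Y j \<omega>) \<partial>M) = (\<integral>\<omega>. f (past Y j \<omega>) \<partial>M) * (\<integral>\<omega>. h (Y j \<omega>) \<partial>M)"
    by (rule indep_var_lebesgue_integral[OF iv fi hi])
qed

end


definition cmp :: "nat \<Rightarrow> real \<times> real \<Rightarrow> real" where
  "cmp \<eta> p = (if \<eta> = 0 then fst p else snd p)"

lemma cmp_meas[measurable]: "cmp \<eta> \<in> borel_measurable borel"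
  unfolding cmp_def by (cases "\<eta> = 0") auto

context bar
begin

abbreviation "g \<equiv> binormal_density (sg^2) rho"

definition s :: "nat \<Rightarrow> real" where "s \<eta> = (\<integral>p. g p * (cmp \<eta> p)^2 \<partial>lborel)"
definition mu :: real where "mu = (\<integral>p. g p * min ((fst p)^2) 1 \<partial>lborel)"

definition al :: "nat \<Rightarrow> real" where "al \<eta> = (if \<eta> = 0 then a0 else a1)"
definition be :: "nat \<Rightarrow> real" where "be \<eta> = (if \<eta> = 0 then b0 else b1)"

lemma sg2: "sg^2 > 0" using sg by simp

lemma g_nonneg: "0 \<le> g p" using binormal_pos[OF sg2 rho] by (simp add: less_imp_le)

lemma eps_cmp: "\<eta> \<le> 1 \<Longrightarrow> eps (2*n+\<eta>) \<omega> = cmp \<eta> (eps (2*n) \<omega>, eps (2*n+1) \<omega>)"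
proof -
  assume "\<eta> \<le> 1" then have "\<eta> = 0 \<or> \<eta> = 1" by auto
  then show ?thesis unfolding cmp_def by auto
qed

lemma rec_gen: "n \<ge> 1 \<Longrightarrow> \<eta> \<le> 1 \<Longrightarrow> \<omega> \<in> space M \<Longrightarrow> X (2*n+\<eta>) \<omega> = al \<eta> * X n \<omega> + be \<eta> + eps (2*n+\<eta>) \<omega>"
proof -
  assume a: "n \<ge> 1" "\<eta> \<le> 1" "\<omega> \<in> space M"
  then have "\<eta> = 0 \<or> \<eta> = 1" by auto
  then show ?thesis using rec0[OF a(1)] rec1[OF a(1)] a(3) by (auto simp: al_def be_def)
qed

lemma dist_h:
  assumes n: "n \<ge> 1" and h[measurable]: "h \<in> borel_measurable (borel :: (real\<times>real) measure)"
  shows "integrable M (\<lambda>\<omega>. h (eps (2*n) \<omega>, eps (2*n+1) \<omega>)) \<longleftrightarrow> integrable lborel (\<lambda>p. g p * h p)"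
    and "(\<integral>\<omega>. h (eps (2*n) \<omega>, eps (2*n+1) \<omega>) \<partial>M) = (\<integral>p. g p * h p \<partial>lborel)"
proof -
  show "integrable M (\<lambda>\<omega>. h (eps (2*n) \<omega>, eps (2*n+1) \<omega>)) \<longleftrightarrow> integrable lborel (\<lambda>p. g p * h p)"
    using distributed_integrable[OF dist[OF n], of h] g_nonneg by simp
  show "(\<integral>\<omega>. h (eps (2*n) \<omega>, eps (2*n+1) \<omega>) \<partial>M) = (\<integral>p. g p * h p \<partial>lborel)"
    using distributed_integral[OF dist[OF n], of h] g_nonneg by simp
qed

lemma eps2:
  assumes n: "n \<ge> 1" and e: "\<eta> \<le> 1"
  shows "integrable M (\<lambda>\<omega>. (eps (2*n+\<eta>) \<omega>)^2)" "(\<integral>\<omega>. (eps (2*n+\<eta>) \<omega>)^2 \<partial>M) = s \<eta>"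
proof -
  have i: "integrable lborel (\<lambda>p. g p * (cmp \<eta> p)^2)"
    using binormal_integrable_sq[OF sg2 rho] by (cases "\<eta> = 0") (auto simp: cmp_def)
  show "integrable M (\<lambda>\<omega>. (eps (2*n+\<eta>) \<omega>)^2)"
    using dist_h(1)[OF n, of "\<lambda>p. (cmp \<eta> p)^2"] i by (simp add: eps_cmp[OF e])
  show "(\<integral>\<omega>. (eps (2*n+\<eta>) \<omega>)^2 \<partial>M) = s \<eta>"
    using dist_h(2)[OF n, of "\<lambda>p. (cmp \<eta> p)^2"] by (simp add: eps_cmp[OF e] s_def)
qed

lemma square_integrable_imp:
  fixes f :: "'a \<Rightarrow> real"
  assumes [measurable]: "f \<in> borel_measurable M" and "integrable M (\<lambda>\<omega>. (f \<omega>)^2)"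
  shows "integrable M f"
proof (rule Bochner_Integration.integrable_bound[of _ "\<lambda>\<omega>. 1 + (f \<omega>)^2"])
  show "integrable M (\<lambda>\<omega>. 1 + (f \<omega>)^2)" using assms by auto
  show "AE x in M. norm (f x) \<le> norm (1 + (f x)^2)"
  proof (intro AE_I2)
    fix x
    have "\<bar>f x\<bar> \<le> 1 + (f x)^2"
    proof (cases "\<bar>f x\<bar> \<le> 1")
      case True then show ?thesis by (smt (verit) zero_le_power2)
    next
      case False
      then have "\<bar>f x\<bar> * 1 \<le> \<bar>f x\<bar> * \<bar>f x\<bar>" by (intro mult_left_mono) auto
      also have "\<dots> = (f x)^2" by (simp add: power2_eq_square)
      finally show ?thesis by simp
    qed
    then show "norm (f x) \<le> norm (1 + (f x)^2)" by simp
  qed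
qed simp

lemma eps1:
  assumes n: "n \<ge> 1" and e: "\<eta> \<le> 1"
  shows "integrable M (\<lambda>\<omega>. eps (2*n+\<eta>) \<omega>)" "(\<integral>\<omega>. eps (2*n+\<eta>) \<omega> \<partial>M) = 0"
proof -
  show i: "integrable M (\<lambda>\<omega>. eps (2*n+\<eta>) \<omega>)"
    using square_integrable_imp[OF epsm eps2(1)[OF n e]] .
  have "integrable M (\<lambda>\<omega>. cmp \<eta> (eps (2*n) \<omega>, eps (2*n+1) \<omega>))"
    using i by (simp add: eps_cmp[OF e])
  have "(\<integral>\<omega>. eps (2*n+\<eta>) \<omega> \<partial>M) = (\<integral>p. g p * cmp \<eta> p \<partial>lborel)"
    using dist_h(2)[OF n, of "\<lambda>p. cmp \<eta> p"] by (simp add: eps_cmp[OF e])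
  also have "\<dots> = 0" using binormal_mean0[of "sg^2" rho] by (cases "\<eta> = 0") (auto simp: cmp_def)
  finally show "(\<integral>\<omega>. eps (2*n+\<eta>) \<omega> \<partial>M) = 0" .
qed

lemma s_nonneg: "\<eta> \<le> 1 \<Longrightarrow> s \<eta> \<ge> 0"
  using eps2(2)[of 1 \<eta>] by (metis integral_nonneg_AE AE_I2 zero_le_power2 order_refl)

end


lemma conv_sq:
  fixes x y l :: real
  assumes "0 < l" "l < 1"
  shows "(x + y)^2 \<le> x^2 / l + y^2 / (1 - l)"
proof -
  have "x^2 / l + y^2 / (1 - l) - (x + y)^2 = ((1 - l) * x - l * y)^2 / (l * (1 - l))"
    using assms by (simp add: field_simps power2_eq_square)
  also have "\<dots> \<ge> 0" using assms by simp
  finally show ?thesis by simp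
qed

context bar
begin

definition "Amax = max \<bar>a0\<bar> \<bar>a1\<bar>"
definition "lam = (1 + Amax) / 2"
definition "kap = Amax^2 / lam"
definition "Bc = (2 * max (b0^2) (b1^2) + 2 * max (s 0) (s 1)) / (1 - lam)"
definition "Cm = max (\<integral>\<omega>. (X 1 \<omega>)^2 \<partial>M) (Bc / (1 - kap))"

lemma cst:
  shows "0 \<le> Amax" "Amax < 1" "0 < lam" "lam < 1" "0 \<le> kap" "kap < 1" "0 \<le> Bc"
proof -
  show A0: "0 \<le> Amax" "Amax < 1" using a0 a1 by (auto simp: Amax_def)
  show l: "0 < lam" "lam < 1" using A0 by (auto simp: lam_def)
  show "0 \<le> kap" using l by (simp add: kap_def)
  have "Amax^2 \<le> Amax" using A0 by (simp add: power2_eq_square mult_left_le)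
  then have "Amax^2 < lam" using A0 by (simp add: lam_def)
  then show "kap < 1" using l by (simp add: kap_def)
  have "0 \<le> 2 * max (b0^2) (b1^2) + 2 * max (s 0) (s 1)" using s_nonneg[of 0] by (simp add: max_def)
  then show "0 \<le> Bc" using l unfolding Bc_def by (intro divide_nonneg_pos) auto
qed

lemma Cm_bound: "kap * Cm + Bc \<le> Cm"
proof -
  have "Bc / (1 - kap) \<le> Cm" by (simp add: Cm_def)
  then have "Bc \<le> (1 - kap) * Cm" using cst by (simp add: field_simps)
  then show ?thesis by (simp add: algebra_simps)
qed

lemma mom:
  assumes "i \<ge> 1"
  shows "integrable M (\<lambda>\<omega>. (X i \<omega>)^2) \<and> (\<integral>\<omega>. (X i \<omega>)^2 \<partial>M) \<le> Cm"
  using assms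
proof (induction i rule: less_induct)
  case (less i)
  show ?case
  proof (cases "i = 1")
    case True then show ?thesis using X1int[of 2] by (simp add: Cm_def)
  next
    case False
    define n where "n = i div 2"
    define \<eta> where "\<eta> = i mod 2"
    have n1: "n \<ge> 1" "n < i" using False less.prems by (auto simp: n_def)
    have e: "\<eta> \<le> 1" by (simp add: \<eta>_def)
    have i: "i = 2*n+\<eta>" by (simp add: n_def \<eta>_def)
    from less.IH[OF n1(2) n1(1)] have ih: "integrable M (\<lambda>\<omega>. (X n \<omega>)^2)" "(\<integral>\<omega>. (X n \<omega>)^2 \<partial>M) \<le> Cm" by auto
    have al: "\<bar>al \<eta>\<bar> \<le> Amax" by (simp add: al_def Amax_def)
    have be: "(be \<eta>)^2 \<le> max (b0^2) (b1^2)" by (simp add: be_def)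
    have sb: "s \<eta> \<le> max (s 0) (s 1)"
    proof -
      have "\<eta> = 0 \<or> \<eta> = 1" using e by auto
      then show ?thesis by auto
    qed
    define D where "D = (\<lambda>\<omega>. kap * (X n \<omega>)^2 + (2 * (be \<eta>)^2 + 2 * (eps (2*n+\<eta>) \<omega>)^2) / (1 - lam))"
    have Di: "integrable M D" unfolding D_def using ih(1) eps2(1)[OF n1(1) e] by auto
    have pw: "(X i \<omega>)^2 \<le> D \<omega>" if \<omega>: "\<omega> \<in> space M" for \<omega>
    proof -
      have "(X i \<omega>)^2 = (al \<eta> * X n \<omega> + (be \<eta> + eps (2*n+\<eta>) \<omega>))^2"
        using rec_gen[OF n1(1) e \<omega>] i by (simp add: add.assoc)
      also have "\<dots> \<le> (al \<eta> * X n \<omega>)^2 / lam + (be \<eta> + eps (2*n+\<eta>) \<omega>)^2 / (1 - lam)"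
        using cst by (intro conv_sq) auto
      also have "(al \<eta> * X n \<omega>)^2 / lam \<le> kap * (X n \<omega>)^2"
      proof -
        have "(al \<eta>)^2 \<le> Amax^2" using power_mono[OF al, of 2] by simp
        then have "(al \<eta>)^2 * (X n \<omega>)^2 \<le> Amax^2 * (X n \<omega>)^2" by (simp add: mult_right_mono)
        then show ?thesis using cst by (simp add: kap_def power_mult_distrib divide_right_mono field_simps)
      qed
      also have "(be \<eta> + eps (2*n+\<eta>) \<omega>)^2 / (1 - lam) \<le> (2 * (be \<eta>)^2 + 2 * (eps (2*n+\<eta>) \<omega>)^2) / (1 - lam)"
      proof -
        have "(be \<eta> + eps (2*n+\<eta>) \<omega>)^2 \<le> 2 * (be \<eta>)^2 + 2 * (eps (2*n+\<eta>) \<omega>)^2"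
          by (smt (verit) sum_squares_bound power2_sum)
        then show ?thesis using cst by (simp add: divide_right_mono)
      qed
      finally show ?thesis by (simp add: D_def)
    qed
    have Xi_int: "integrable M (\<lambda>\<omega>. (X i \<omega>)^2)"
      by (rule Bochner_Integration.integrable_bound[OF Di]) (auto intro!: AE_I2 simp: pw order_trans[OF pw abs_ge_self])
    have "(\<integral>\<omega>. (X i \<omega>)^2 \<partial>M) \<le> (\<integral>\<omega>. D \<omega> \<partial>M)"
      by (intro integral_mono_AE Xi_int Di AE_I2 pw)
    also have "(\<integral>\<omega>. D \<omega> \<partial>M) = kap * (\<integral>\<omega>. (X n \<omega>)^2 \<partial>M) + (2 * (be \<eta>)^2 + 2 * s \<eta>) / (1 - lam)"
      unfolding D_def using ih(1) eps2[OF n1(1) e] by (simp add: prob_space)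
    also have "\<dots> \<le> kap * Cm + Bc"
    proof (intro add_mono)
      show "kap * (\<integral>\<omega>. (X n \<omega>)^2 \<partial>M) \<le> kap * Cm" using ih(2) cst by (simp add: mult_left_mono)
      have "2 * (be \<eta>)^2 + 2 * s \<eta> \<le> 2 * max (b0^2) (b1^2) + 2 * max (s 0) (s 1)" using be sb by simp
      then show "(2 * (be \<eta>)^2 + 2 * s \<eta>) / (1 - lam) \<le> Bc" using cst by (simp add: Bc_def divide_right_mono)
    qed
    also have "\<dots> \<le> Cm" by (rule Cm_bound)
    finally show ?thesis using Xi_int by simp
  qed
qed

lemma X2_int: "i \<ge> 1 \<Longrightarrow> integrable M (\<lambda>\<omega>. (X i \<omega>)^2)" using mom by blast
lemma X2_le: "i \<ge> 1 \<Longrightarrow> (\<integral>\<omega>. (X i \<omega>)^2 \<partial>M) \<le> Cm" using mom by blast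
lemma X_int: "i \<ge> 1 \<Longrightarrow> integrable M (X i)" using square_integrable_imp[OF Xm X2_int] by simp
lemma Cm_nonneg: "0 \<le> Cm"
proof -
  have "0 \<le> (\<integral>\<omega>. (X 1 \<omega>)^2 \<partial>M)" by (intro integral_nonneg_AE AE_I2) simp
  moreover have "(\<integral>\<omega>. (X 1 \<omega>)^2 \<partial>M) \<le> Cm" by (rule X2_le) simp
  ultimately show ?thesis by linarith
qed

end


lemma sum_sq_orth:
  fixes Z :: "nat \<Rightarrow> 'a \<Rightarrow> real"
  assumes fin: "finite I"
    and int: "\<And>i j. i \<in> I \<Longrightarrow> j \<in> I \<Longrightarrow> integrable M (\<lambda>\<omega>. Z i \<omega> * Z j \<omega>)"
    and orth: "\<And>i j. i \<in> I \<Longrightarrow> j \<in> I \<Longrightarrow> i < j \<Longrightarrow> (\<integral>\<omega>. Z i \<omega> * Z j \<omega> \<partial>M) = 0"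
  shows "integrable M (\<lambda>\<omega>. (\<Sum>i\<in>I. Z i \<omega>)^2)"
    and "(\<integral>\<omega>. (\<Sum>i\<in>I. Z i \<omega>)^2 \<partial>M) = (\<Sum>i\<in>I. \<integral>\<omega>. (Z i \<omega>)^2 \<partial>M)"
proof -
  have eq: "(\<Sum>i\<in>I. Z i \<omega>)^2 = (\<Sum>i\<in>I. \<Sum>j\<in>I. Z i \<omega> * Z j \<omega>)" for \<omega>
    by (simp add: power2_eq_square sum_product)
  show "integrable M (\<lambda>\<omega>. (\<Sum>i\<in>I. Z i \<omega>)^2)"
    unfolding eq using int by (intro Bochner_Integration.integrable_sum) auto
  have off: "(\<integral>\<omega>. Z i \<omega> * Z j \<omega> \<partial>M) = (if i = j then (\<integral>\<omega>. (Z i \<omega>)^2 \<partial>M) else 0)"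
    if "i \<in> I" "j \<in> I" for i j
  proof (cases "i = j")
    case True then show ?thesis by (simp add: power2_eq_square)
  next
    case False
    then show ?thesis
    proof (cases "i < j")
      case True then show ?thesis using orth that False by simp
    next
      case False': False
      then have "j < i" using False by simp
      then show ?thesis using orth[of j i] that False by (simp add: mult.commute)
    qed
  qed
  have "(\<integral>\<omega>. (\<Sum>i\<in>I. Z i \<omega>)^2 \<partial>M) = (\<Sum>i\<in>I. \<Sum>j\<in>I. \<integral>\<omega>. Z i \<omega> * Z j \<omega> \<partial>M)"
    unfolding eq using int by (simp add: integral_sum integrable_sum)
  also have "\<dots> = (\<Sum>i\<in>I. \<Sum>j\<in>I. (if i = j then (\<integral>\<omega>. (Z i \<omega>)^2 \<partial>M) else 0))"
    by (intro sum.cong refl) (simp add: off)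
  also have "\<dots> = (\<Sum>i\<in>I. \<integral>\<omega>. (Z i \<omega>)^2 \<partial>M)"
    using fin by (simp add: sum.delta)
  finally show "(\<integral>\<omega>. (\<Sum>i\<in>I. Z i \<omega>)^2 \<partial>M) = (\<Sum>i\<in>I. \<integral>\<omega>. (Z i \<omega>)^2 \<partial>M)" .
qed

lemma comp_meas:
  assumes "k < j"
  shows "(\<lambda>v::nat \<Rightarrow> real \<times> real. cmp \<eta> (v k)) \<in> borel_measurable (PiM {..<j} (\<lambda>_. lborel))"
proof -
  have "(\<lambda>v::nat \<Rightarrow> real \<times> real. v k) \<in> measurable (PiM {..<j} (\<lambda>_. lborel)) (borel :: (real\<times>real) measure)"
    using measurable_component_singleton[of k "{..<j}" "\<lambda>_. lborel"] assms by simp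
  from measurable_compose[OF this cmp_meas] show ?thesis by simp
qed

context bar
begin

lemma Y_eps: "j \<ge> 1 \<Longrightarrow> \<eta> \<le> 1 \<Longrightarrow> eps (2*j+\<eta>) \<omega> = cmp \<eta> (Y j \<omega>)"
  using eps_cmp[of \<eta> j \<omega>] by (simp add: Yv_def)

lemma past_eps: "1 \<le> i \<Longrightarrow> i < j \<Longrightarrow> \<eta> \<le> 1 \<Longrightarrow> eps (2*i+\<eta>) \<omega> = cmp \<eta> (past Y j \<omega> i)"
  using Y_eps[of i \<eta> \<omega>] by (simp add: past_def)

lemma S1:
  assumes fin: "finite I" and I: "\<And>i. i \<in> I \<Longrightarrow> i \<ge> 1" and e: "\<eta> \<le> 1"
  shows "integrable M (\<lambda>\<omega>. (\<Sum>i\<in>I. eps (2*i+\<eta>) \<omega>)^2)"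
    and "(\<integral>\<omega>. (\<Sum>i\<in>I. eps (2*i+\<eta>) \<omega>)^2 \<partial>M) = real (card I) * s \<eta>"
proof -
  have int: "integrable M (\<lambda>\<omega>. eps (2*i+\<eta>) \<omega> * eps (2*j+\<eta>) \<omega>)
      \<and> (i < j \<longrightarrow> (\<integral>\<omega>. eps (2*i+\<eta>) \<omega> * eps (2*j+\<eta>) \<omega> \<partial>M) = 0)"
    if "i \<in> I" "j \<in> I" "i \<le> j" for i j
  proof (cases "i = j")
    case True then show ?thesis using eps2(1)[OF I[OF that(1)] e] by (simp add: power2_eq_square)
  next
    case False
    then have ij: "i < j" using that by simp
    have j1: "j \<ge> 1" and i1: "i \<ge> 1" using I that by auto
    have fi: "integrable M (\<lambda>\<omega>. cmp \<eta> (past Y j \<omega> i))"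
      using eps1(1)[OF i1 e] by (simp add: past_eps[OF i1 ij e])
    have hi: "integrable M (\<lambda>\<omega>. cmp \<eta> (Y j \<omega>))"
      using eps1(1)[OF j1 e] by (simp add: Y_eps[OF j1 e])
    note P = indep_prod[OF j1 comp_meas[OF ij] cmp_meas fi hi]
    show ?thesis using P eps1(2)[OF j1 e] ij
      by (simp add: past_eps[OF i1 ij e] Y_eps[OF j1 e])
  qed
  have int2: "integrable M (\<lambda>\<omega>. eps (2*i+\<eta>) \<omega> * eps (2*j+\<eta>) \<omega>)" if "i \<in> I" "j \<in> I" for i j
    using int[of i j] int[of j i] that by (cases "i \<le> j") (auto simp: mult.commute)
  note R = sum_sq_orth[where Z="\<lambda>i \<omega>. eps (2*i+\<eta>) \<omega>" and M=M, OF fin int2]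
  show "integrable M (\<lambda>\<omega>. (\<Sum>i\<in>I. eps (2*i+\<eta>) \<omega>)^2)"
    using R int by auto
  have "(\<integral>\<omega>. (\<Sum>i\<in>I. eps (2*i+\<eta>) \<omega>)^2 \<partial>M) = (\<Sum>i\<in>I. \<integral>\<omega>. (eps (2*i+\<eta>) \<omega>)^2 \<partial>M)"
    using R int by auto
  also have "\<dots> = (\<Sum>i\<in>I. s \<eta>)" using eps2(2)[OF I e] by simp
  finally show "(\<integral>\<omega>. (\<Sum>i\<in>I. eps (2*i+\<eta>) \<omega>)^2 \<partial>M) = real (card I) * s \<eta>" by simp
qed

end


lemma abs_mult_le_sq: "\<bar>(a::real) * b\<bar> \<le> a^2 + b^2"
proof -
  have "2*\<bar>a\<bar>*\<bar>b\<bar> \<le> \<bar>a\<bar>^2+\<bar>b\<bar>^2" by (rule sum_squares_bound)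
  moreover have "0 \<le> \<bar>a\<bar>*\<bar>b\<bar>" by simp
  ultimately have "\<bar>a\<bar>*\<bar>b\<bar> \<le> \<bar>a\<bar>^2+\<bar>b\<bar>^2" by linarith
  then show ?thesis by (simp add: abs_mult)
qed

context bar
begin

lemma XE2:
  assumes i1: "i \<ge> 1" and e: "\<eta> \<le> 1"
  shows "integrable M (\<lambda>\<omega>. (X i \<omega>)^2 * (eps (2*i+\<eta>) \<omega>)^2)"
    and "(\<integral>\<omega>. (X i \<omega>)^2 * (eps (2*i+\<eta>) \<omega>)^2 \<partial>M) = (\<integral>\<omega>. (X i \<omega>)^2 \<partial>M) * s \<eta>"
proof -
  have fm: "(\<lambda>v. (F i v)^2) \<in> borel_measurable (PiM {..<i} (\<lambda>_. lborel))"
    using Fx_measurable[of i i] i1 by measurable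
  have hm: "(\<lambda>p. (cmp \<eta> p)^2) \<in> borel_measurable (borel :: (real \<times> real) measure)" by measurable
  have eqX: "\<And>\<omega>. \<omega> \<in> space M \<Longrightarrow> (F i (past Y i \<omega>))^2 = (X i \<omega>)^2" using X_past[OF i1 order_refl] by simp
  have eqE: "\<And>\<omega>. (cmp \<eta> (Y i \<omega>))^2 = (eps (2*i+\<eta>) \<omega>)^2" using Y_eps[OF i1 e] by simp
  have fi: "integrable M (\<lambda>\<omega>. (F i (past Y i \<omega>))^2)"
    using X2_int[OF i1] by (subst Bochner_Integration.integrable_cong[OF refl eqX]) auto
  have hi: "integrable M (\<lambda>\<omega>. (cmp \<eta> (Y i \<omega>))^2)" using eps2(1)[OF i1 e] by (simp add: eqE)
  note P = indep_prod[OF i1 fm hm fi hi]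
  have eqP: "\<And>\<omega>. \<omega> \<in> space M \<Longrightarrow> (F i (past Y i \<omega>))^2 * (cmp \<eta> (Y i \<omega>))^2 = (X i \<omega>)^2 * (eps (2*i+\<eta>) \<omega>)^2"
    using eqX eqE by simp
  show "integrable M (\<lambda>\<omega>. (X i \<omega>)^2 * (eps (2*i+\<eta>) \<omega>)^2)"
    using P(1) by (subst Bochner_Integration.integrable_cong[OF refl eqP[symmetric]]) auto
  have "(\<integral>\<omega>. (X i \<omega>)^2 * (eps (2*i+\<eta>) \<omega>)^2 \<partial>M) = (\<integral>\<omega>. (F i (past Y i \<omega>))^2 * (cmp \<eta> (Y i \<omega>))^2 \<partial>M)"
    by (rule Bochner_Integration.integral_cong[OF refl]) (simp add: eqP)
  also have "\<dots> = (\<integral>\<omega>. (F i (past Y i \<omega>))^2 \<partial>M) * (\<integral>\<omega>. (cmp \<eta> (Y i \<omega>))^2 \<partial>M)" by (rule P(2))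
  also have "(\<integral>\<omega>. (F i (past Y i \<omega>))^2 \<partial>M) = (\<integral>\<omega>. (X i \<omega>)^2 \<partial>M)"
    by (rule Bochner_Integration.integral_cong[OF refl]) (simp add: eqX)
  also have "(\<integral>\<omega>. (cmp \<eta> (Y i \<omega>))^2 \<partial>M) = s \<eta>" using eps2(2)[OF i1 e] by (simp add: eqE)
  finally show "(\<integral>\<omega>. (X i \<omega>)^2 * (eps (2*i+\<eta>) \<omega>)^2 \<partial>M) = (\<integral>\<omega>. (X i \<omega>)^2 \<partial>M) * s \<eta>" .
qed

lemma S2:
  assumes fin: "finite I" and I: "\<And>i. i \<in> I \<Longrightarrow> i \<ge> 1" and e: "\<eta> \<le> 1"
  shows "integrable M (\<lambda>\<omega>. (\<Sum>i\<in>I. X i \<omega> * eps (2*i+\<eta>) \<omega>)^2)"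
    and "(\<integral>\<omega>. (\<Sum>i\<in>I. X i \<omega> * eps (2*i+\<eta>) \<omega>)^2 \<partial>M) \<le> real (card I) * (Cm * s \<eta>)"
proof -
  have int: "integrable M (\<lambda>\<omega>. (X i \<omega> * eps (2*i+\<eta>) \<omega>) * (X j \<omega> * eps (2*j+\<eta>) \<omega>))
      \<and> (i < j \<longrightarrow> (\<integral>\<omega>. (X i \<omega> * eps (2*i+\<eta>) \<omega>) * (X j \<omega> * eps (2*j+\<eta>) \<omega>) \<partial>M) = 0)"
    if "i \<in> I" "j \<in> I" "i \<le> j" for i j
  proof (cases "i = j")
    case True then show ?thesis using XE2(1)[OF I[OF that(1)] e] by (simp add: power2_eq_square mult_ac)
  next
    case False
    then have ij: "i < j" using that by simp
    have j1: "j \<ge> 1" and i1: "i \<ge> 1" using I that by auto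
    define f where "f = (\<lambda>v. F i v * cmp \<eta> (v i) * F j v)"
    have fm: "f \<in> borel_measurable (PiM {..<j} (\<lambda>_. lborel))"
      unfolding f_def using Fx_measurable[of i j] Fx_measurable[of j j] comp_meas[OF ij, of \<eta>] ij j1
      by (intro borel_measurable_times) auto
    have eqf: "f (past Y j \<omega>) = X i \<omega> * eps (2*i+\<eta>) \<omega> * X j \<omega>" if "\<omega> \<in> space M" for \<omega>
      unfolding f_def using X_past[OF i1 less_imp_le[OF ij] that] X_past[OF j1 order_refl that] past_eps[OF i1 ij e]
      by simp
    have d: "integrable M (\<lambda>\<omega>. (X i \<omega>)^2 * (eps (2*i+\<eta>) \<omega>)^2 + (X j \<omega>)^2)"
      using XE2(1)[OF i1 e] X2_int[OF j1] by auto
    have fi0: "integrable M (\<lambda>\<omega>. X i \<omega> * eps (2*i+\<eta>) \<omega> * X j \<omega>)"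
    proof (rule Bochner_Integration.integrable_bound[OF d])
      show "AE x in M. norm (X i x * eps (2*i+\<eta>) x * X j x) \<le> norm ((X i x)^2 * (eps (2*i+\<eta>) x)^2 + (X j x)^2)"
      proof (intro AE_I2)
        fix x
        have "\<bar>(X i x * eps (2*i+\<eta>) x) * X j x\<bar> \<le> (X i x * eps (2*i+\<eta>) x)^2 + (X j x)^2" by (rule abs_mult_le_sq)
        then show "norm (X i x * eps (2*i+\<eta>) x * X j x) \<le> norm ((X i x)^2 * (eps (2*i+\<eta>) x)^2 + (X j x)^2)"
          by (simp add: power_mult_distrib)
      qed
    qed simp
    have fi: "integrable M (\<lambda>\<omega>. f (past Y j \<omega>))"
      using fi0 by (subst Bochner_Integration.integrable_cong[OF refl eqf]) auto
    have hi: "integrable M (\<lambda>\<omega>. cmp \<eta> (Y j \<omega>))"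
      using eps1(1)[OF j1 e] by (simp add: Y_eps[OF j1 e])
    note P = indep_prod[OF j1 fm cmp_meas fi hi]
    have eqP: "f (past Y j \<omega>) * cmp \<eta> (Y j \<omega>) = (X i \<omega> * eps (2*i+\<eta>) \<omega>) * (X j \<omega> * eps (2*j+\<eta>) \<omega>)"
      if "\<omega> \<in> space M" for \<omega>
      using eqf[OF that] Y_eps[OF j1 e] by (simp add: mult_ac)
    have I1: "integrable M (\<lambda>\<omega>. (X i \<omega> * eps (2*i+\<eta>) \<omega>) * (X j \<omega> * eps (2*j+\<eta>) \<omega>))"
      using P(1) by (subst Bochner_Integration.integrable_cong[OF refl eqP[symmetric]]) auto
    have "(\<integral>\<omega>. (X i \<omega> * eps (2*i+\<eta>) \<omega>) * (X j \<omega> * eps (2*j+\<eta>) \<omega>) \<partial>M)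
        = (\<integral>\<omega>. f (past Y j \<omega>) * cmp \<eta> (Y j \<omega>) \<partial>M)"
      by (rule Bochner_Integration.integral_cong[OF refl]) (simp add: eqP)
    also have "\<dots> = 0" using P(2) eps1(2)[OF j1 e] by (simp add: Y_eps[OF j1 e])
    finally show ?thesis using I1 by simp
  qed
  have int2: "integrable M (\<lambda>\<omega>. (X i \<omega> * eps (2*i+\<eta>) \<omega>) * (X j \<omega> * eps (2*j+\<eta>) \<omega>))" if "i \<in> I" "j \<in> I" for i j
    using int[of i j] int[of j i] that by (cases "i \<le> j") (auto simp: mult.commute)
  note R = sum_sq_orth[where Z="\<lambda>i \<omega>. X i \<omega> * eps (2*i+\<eta>) \<omega>" and M=M, OF fin int2]
  show "integrable M (\<lambda>\<omega>. (\<Sum>i\<in>I. X i \<omega> * eps (2*i+\<eta>) \<omega>)^2)"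
    using R int by auto
  have "(\<integral>\<omega>. (\<Sum>i\<in>I. X i \<omega> * eps (2*i+\<eta>) \<omega>)^2 \<partial>M) = (\<Sum>i\<in>I. \<integral>\<omega>. (X i \<omega> * eps (2*i+\<eta>) \<omega>)^2 \<partial>M)"
    using R int by auto
  also have "\<dots> \<le> (\<Sum>i\<in>I. Cm * s \<eta>)"
  proof (intro sum_mono)
    fix i assume "i \<in> I"
    then have i1: "i \<ge> 1" by (rule I)
    have "(\<integral>\<omega>. (X i \<omega> * eps (2*i+\<eta>) \<omega>)^2 \<partial>M) = (\<integral>\<omega>. (X i \<omega>)^2 \<partial>M) * s \<eta>"
      using XE2(2)[OF i1 e] by (simp add: power_mult_distrib)
    also have "\<dots> \<le> Cm * s \<eta>" using X2_le[OF i1] s_nonneg[OF e] by (simp add: mult_right_mono)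
    finally show "(\<integral>\<omega>. (X i \<omega> * eps (2*i+\<eta>) \<omega>)^2 \<partial>M) \<le> Cm * s \<eta>" .
  qed
  finally show "(\<integral>\<omega>. (\<Sum>i\<in>I. X i \<omega> * eps (2*i+\<eta>) \<omega>)^2 \<partial>M) \<le> real (card I) * (Cm * s \<eta>)" by simp
qed

end


context bar
begin

definition tr :: "real \<times> real \<Rightarrow> real" where "tr p = min ((fst p)^2) 1"

lemma tr_meas[measurable]: "tr \<in> borel_measurable borel" unfolding tr_def by measurable
lemma tr_bounds: "0 \<le> tr p" "tr p \<le> 1" unfolding tr_def by auto

lemma tr_int_M: "n \<ge> 1 \<Longrightarrow> integrable M (\<lambda>\<omega>. tr (eps (2*n) \<omega>, eps (2*n+1) \<omega>))"
  by (rule Bochner_Integration.integrable_bound[of _ "\<lambda>_. 1::real"]) (auto intro!: AE_I2 simp: tr_bounds)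

lemma tr_E: "n \<ge> 1 \<Longrightarrow> (\<integral>\<omega>. tr (eps (2*n) \<omega>, eps (2*n+1) \<omega>) \<partial>M) = mu"
  using dist_h(2)[of n tr] by (simp add: mu_def tr_def)

lemma mu_bounds: "0 \<le> mu" "mu \<le> 1"
proof -
  have "0 \<le> (\<integral>\<omega>. tr (eps (2*1) \<omega>, eps (2*1+1) \<omega>) \<partial>M)" by (intro integral_nonneg_AE AE_I2 tr_bounds)
  then show "0 \<le> mu" using tr_E[of 1] by simp
  have "(\<integral>\<omega>. tr (eps (2*1) \<omega>, eps (2*1+1) \<omega>) \<partial>M) \<le> (\<integral>\<omega>. 1 \<partial>M)"
    by (intro integral_mono_AE tr_int_M AE_I2 tr_bounds) auto
  then show "mu \<le> 1" using tr_E[of 1] by (simp add: prob_space)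
qed

lemma mu_pos: "mu > 0"
proof (rule ccontr)
  assume "\<not> mu > 0"
  then have m0: "mu = 0" using mu_bounds by simp
  have gi: "integrable lborel (\<lambda>p. g p * tr p)" using dist_h(1)[of 1 tr] tr_int_M[of 1] by simp
  have "AE p in lborel. g p * tr p = 0"
    using integral_nonneg_eq_0_iff_AE[OF gi] m0 g_nonneg tr_bounds by (simp add: mu_def tr_def)
  then have "AE p in lborel. fst (p::real\<times>real) = 0"
  proof eventually_elim
    fix p :: "real \<times> real" assume "g p * tr p = 0"
    then have "tr p = 0" using binormal_pos[OF sg2 rho, of p] by simp
    then show "fst p = 0" by (simp add: tr_def min_def split: if_splits)
  qed
  then obtain N where N: "{p::real\<times>real \<in> space lborel. \<not> fst p = 0} \<subseteq> N" "emeasure lborel N = 0" "N \<in> sets lborel"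
    by (rule AE_E)
  have sub: "{1..2::real} \<times> {1..2::real} \<subseteq> N" using N(1) by auto
  have "emeasure (lborel \<Otimes>\<^sub>M lborel) ({1..2::real} \<times> {1..2::real}) = 1"
    by (subst sigma_finite_measure.emeasure_pair_measure_Times[OF sigma_finite_lborel]) auto
  then have "emeasure lborel ({1..2::real} \<times> {1..2::real}) = 1" by (simp add: lborel_prod)
  moreover have "emeasure lborel ({1..2::real} \<times> {1..2::real}) \<le> emeasure lborel N"
    using sub N(3) by (intro emeasure_mono) auto
  ultimately show False using N(2) by auto
qed

lemma S3:
  assumes fin: "finite I" and I: "\<And>i. i \<in> I \<Longrightarrow> i \<ge> 1"
  shows "integrable M (\<lambda>\<omega>. (\<Sum>i\<in>I. tr (Y i \<omega>) - mu)^2)"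
    and "(\<integral>\<omega>. (\<Sum>i\<in>I. tr (Y i \<omega>) - mu)^2 \<partial>M) \<le> real (card I)"
proof -
  have bnd: "\<bar>tr p - mu\<bar> \<le> 1" for p using tr_bounds[of p] mu_bounds by auto
  have sq: "(tr p - mu) * (tr p - mu) \<le> 1" for p
  proof -
    have "\<bar>tr p - mu\<bar> * \<bar>tr p - mu\<bar> \<le> 1 * 1" using bnd[of p] by (intro mult_mono) auto
    then show ?thesis by (simp add: abs_mult_self_eq)
  qed
  have TI: "integrable M (\<lambda>\<omega>. tr (Y i \<omega>) - mu)" if "i \<ge> 1" for i
    using tr_int_M[OF that] that by (simp add: Yv_def)
  have TE: "(\<integral>\<omega>. tr (Y i \<omega>) - mu \<partial>M) = 0" if "i \<ge> 1" for i
    using tr_E[OF that] that tr_int_M[OF that] by (simp add: Yv_def prob_space)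
  have int: "integrable M (\<lambda>\<omega>. (tr (Y i \<omega>) - mu) * (tr (Y j \<omega>) - mu))
      \<and> (i < j \<longrightarrow> (\<integral>\<omega>. (tr (Y i \<omega>) - mu) * (tr (Y j \<omega>) - mu) \<partial>M) = 0)"
    if "i \<in> I" "j \<in> I" "i \<le> j" for i j
  proof (cases "i = j")
    case True
    show ?thesis using True
      by (auto intro!: Bochner_Integration.integrable_bound[of _ "\<lambda>_. 1::real"] AE_I2
          simp: abs_mult sq)
  next
    case False
    then have ij: "i < j" using that by simp
    have j1: "j \<ge> 1" using I that by auto
    have fm: "(\<lambda>v::nat \<Rightarrow> real\<times>real. tr (v i) - mu) \<in> borel_measurable (PiM {..<j} (\<lambda>_. lborel))"
    proof -
      have "(\<lambda>v::nat \<Rightarrow> real \<times> real. v i) \<in> measurable (PiM {..<j} (\<lambda>_. lborel)) (borel :: (real\<times>real) measure)"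
        using measurable_component_singleton[of i "{..<j}" "\<lambda>_. lborel"] ij by simp
      from measurable_compose[OF this tr_meas] show ?thesis by simp
    qed
    have hm: "(\<lambda>p. tr p - mu) \<in> borel_measurable (borel :: (real\<times>real) measure)" by measurable
    have fi: "integrable M (\<lambda>\<omega>. tr (past Y j \<omega> i) - mu)"
      using TI[of i] I that ij by (simp add: past_def)
    note P = indep_prod[OF j1 fm hm fi TI[OF j1]]
    show ?thesis using P TE[OF j1] ij by (simp add: past_def)
  qed
  have int2: "integrable M (\<lambda>\<omega>. (tr (Y i \<omega>) - mu) * (tr (Y j \<omega>) - mu))" if "i \<in> I" "j \<in> I" for i j
    using int[of i j] int[of j i] that by (cases "i \<le> j") (auto simp: mult.commute)
  note R = sum_sq_orth[where Z="\<lambda>i \<omega>. tr (Y i \<omega>) - mu" and M=M, OF fin int2]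
  show "integrable M (\<lambda>\<omega>. (\<Sum>i\<in>I. tr (Y i \<omega>) - mu)^2)"
    using R int by auto
  have "(\<integral>\<omega>. (\<Sum>i\<in>I. tr (Y i \<omega>) - mu)^2 \<partial>M) = (\<Sum>i\<in>I. \<integral>\<omega>. (tr (Y i \<omega>) - mu)^2 \<partial>M)"
    using R int by auto
  also have "\<dots> \<le> (\<Sum>i\<in>I. 1)"
  proof (intro sum_mono)
    fix i assume "i \<in> I"
    have "(\<integral>\<omega>. (tr (Y i \<omega>) - mu)^2 \<partial>M) \<le> (\<integral>\<omega>. 1 \<partial>M)"
    proof (intro integral_mono_AE AE_I2)
      show "integrable M (\<lambda>\<omega>. (tr (Y i \<omega>) - mu)^2)"
        by (rule Bochner_Integration.integrable_bound[of _ "\<lambda>_. 1::real"])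
           (auto intro!: AE_I2 simp: power2_eq_square sq)
      fix x show "(tr (Y i x) - mu)^2 \<le> 1" using abs_le_square_iff[of "tr (Y i x) - mu" 1] bnd by simp
    qed auto
    then show "(\<integral>\<omega>. (tr (Y i \<omega>) - mu)^2 \<partial>M) \<le> 1" by (simp add: prob_space)
  qed
  finally show "(\<integral>\<omega>. (\<Sum>i\<in>I. tr (Y i \<omega>) - mu)^2 \<partial>M) \<le> real (card I)" by simp
qed

end


context bar
begin

lemma cheb:
  fixes Z :: "'a \<Rightarrow> real"
  assumes [measurable]: "Z \<in> borel_measurable M" and i: "integrable M (\<lambda>\<omega>. (Z \<omega>)^2)" and c: "c > 0"
  shows "measure M {\<omega>\<in>space M. c \<le> \<bar>Z \<omega>\<bar>} \<le> (\<integral>\<omega>. (Z \<omega>)^2 \<partial>M) / c^2"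
proof -
  have "{\<omega>\<in>space M. c \<le> \<bar>Z \<omega>\<bar>} = {\<omega>\<in>space M. c^2 \<le> (Z \<omega>)^2}"
    using c by (auto simp: abs_le_square_iff[symmetric])
  also have "measure M \<dots> \<le> (\<integral>\<omega>. (Z \<omega>)^2 \<partial>M) / c^2"
    by (rule integral_Markov_inequality_measure[OF i, of "space M"]) (use c in auto)
  finally show ?thesis .
qed

lemma P1:
  assumes fin: "finite I" and I: "\<And>i. i \<in> I \<Longrightarrow> i \<ge> 1" and e: "\<eta> \<le> 1" and c: "c > 0"
  shows "measure M {\<omega>\<in>space M. c \<le> \<bar>\<Sum>i\<in>I. eps (2*i+\<eta>) \<omega>\<bar>} \<le> real (card I) * s \<eta> / c^2"
  using cheb[OF _ S1(1)[OF fin I e] c] S1(2)[OF fin I e] by simp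

lemma P2:
  assumes fin: "finite I" and I: "\<And>i. i \<in> I \<Longrightarrow> i \<ge> 1" and e: "\<eta> \<le> 1" and c: "c > 0"
  shows "measure M {\<omega>\<in>space M. c \<le> \<bar>\<Sum>i\<in>I. X i \<omega> * eps (2*i+\<eta>) \<omega>\<bar>} \<le> real (card I) * (Cm * s \<eta>) / c^2"
proof -
  have "measure M {\<omega>\<in>space M. c \<le> \<bar>\<Sum>i\<in>I. X i \<omega> * eps (2*i+\<eta>) \<omega>\<bar>} \<le> (\<integral>\<omega>. (\<Sum>i\<in>I. X i \<omega> * eps (2*i+\<eta>) \<omega>)^2 \<partial>M) / c^2"
    using cheb[OF _ S2(1)[OF fin I e] c] by simp
  also have "\<dots> \<le> real (card I) * (Cm * s \<eta>) / c^2"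
    using S2(2)[OF fin I e] c by (simp add: divide_right_mono)
  finally show ?thesis .
qed

lemma P3:
  assumes fin: "finite I" and I: "\<And>i. i \<in> I \<Longrightarrow> i \<ge> 1" and c: "c > 0"
  shows "measure M {\<omega>\<in>space M. c \<le> \<bar>\<Sum>i\<in>I. tr (Y i \<omega>) - mu\<bar>} \<le> real (card I) / c^2"
proof -
  have "measure M {\<omega>\<in>space M. c \<le> \<bar>\<Sum>i\<in>I. tr (Y i \<omega>) - mu\<bar>} \<le> (\<integral>\<omega>. (\<Sum>i\<in>I. tr (Y i \<omega>) - mu)^2 \<partial>M) / c^2"
    using cheb[OF _ S3(1)[OF fin I] c] by simp
  also have "\<dots> \<le> real (card I) / c^2"
    using S3(2)[OF fin I] c by (simp add: divide_right_mono)
  finally show ?thesis .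
qed

lemma P4:
  assumes fin: "finite I" and I: "\<And>i. i \<in> I \<Longrightarrow> i \<ge> 1" and c: "c > 0"
  shows "measure M {\<omega>\<in>space M. c \<le> \<bar>\<Sum>i\<in>I. X i \<omega>\<bar>} \<le> real (card I) * (1 + Cm) / c"
proof -
  have absX: "integrable M (\<lambda>\<omega>. \<bar>X i \<omega>\<bar>)" "(\<integral>\<omega>. \<bar>X i \<omega>\<bar> \<partial>M) \<le> 1 + Cm" if "i \<in> I" for i
  proof -
    have i1: "i \<ge> 1" using I that .
    show "integrable M (\<lambda>\<omega>. \<bar>X i \<omega>\<bar>)" using X_int[OF i1] by auto
    have "(\<integral>\<omega>. \<bar>X i \<omega>\<bar> \<partial>M) \<le> (\<integral>\<omega>. 1 + (X i \<omega>)^2 \<partial>M)"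
    proof (intro integral_mono_AE AE_I2)
      show "integrable M (\<lambda>\<omega>. \<bar>X i \<omega>\<bar>)" using X_int[OF i1] by auto
      show "integrable M (\<lambda>\<omega>. 1 + (X i \<omega>)^2)" using X2_int[OF i1] by auto
      fix x
      show "\<bar>X i x\<bar> \<le> 1 + (X i x)^2"
      proof (cases "\<bar>X i x\<bar> \<le> 1")
        case True then show ?thesis by (smt (verit) zero_le_power2)
      next
        case False
        then have "\<bar>X i x\<bar> * 1 \<le> \<bar>X i x\<bar> * \<bar>X i x\<bar>" by (intro mult_left_mono) auto
        also have "\<dots> = (X i x)^2" by (simp add: power2_eq_square)
        finally show ?thesis by simp
      qed
    qed
    also have "\<dots> = 1 + (\<integral>\<omega>. (X i \<omega>)^2 \<partial>M)" using X2_int[OF i1] by (simp add: prob_space)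
    also have "\<dots> \<le> 1 + Cm" using X2_le[OF i1] by simp
    finally show "(\<integral>\<omega>. \<bar>X i \<omega>\<bar> \<partial>M) \<le> 1 + Cm" .
  qed
  have si: "integrable M (\<lambda>\<omega>. \<Sum>i\<in>I. \<bar>X i \<omega>\<bar>)" using absX(1) by (intro Bochner_Integration.integrable_sum) auto
  have "{\<omega>\<in>space M. c \<le> \<bar>\<Sum>i\<in>I. X i \<omega>\<bar>} \<subseteq> {\<omega>\<in>space M. c \<le> (\<Sum>i\<in>I. \<bar>X i \<omega>\<bar>)}"
    using sum_abs[of "\<lambda>i. X i _" I] by (auto intro: order_trans)
  then have "measure M {\<omega>\<in>space M. c \<le> \<bar>\<Sum>i\<in>I. X i \<omega>\<bar>} \<le> measure M {\<omega>\<in>space M. c \<le> (\<Sum>i\<in>I. \<bar>X i \<omega>\<bar>)}"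
    by (intro finite_measure_mono) auto
  also have "\<dots> \<le> (\<integral>\<omega>. (\<Sum>i\<in>I. \<bar>X i \<omega>\<bar>) \<partial>M) / c"
    by (rule integral_Markov_inequality_measure[OF si, of "space M"]) (use c in \<open>auto intro!: AE_I2 sum_nonneg\<close>)
  also have "(\<integral>\<omega>. (\<Sum>i\<in>I. \<bar>X i \<omega>\<bar>) \<partial>M) = (\<Sum>i\<in>I. \<integral>\<omega>. \<bar>X i \<omega>\<bar> \<partial>M)"
    using absX(1) by (intro Bochner_Integration.integral_sum) auto
  also have "\<dots> \<le> (\<Sum>i\<in>I. 1 + Cm)" using absX(2) by (intro sum_mono) auto
  finally show ?thesis using c by (simp add: divide_right_mono)
qed

end


lemma meas_Un2:
  assumes "A \<in> sets M" "B \<in> sets M" "measure M A \<le> a" "measure M B \<le> b"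
  shows "measure M (A \<union> B) \<le> a + b"
  using measure_Un_le[OF assms(1,2)] assms(3,4) by linarith

lemma card_Tset_ge: "real (card (Tset k)) \<ge> 2^k"
proof -
  have "(2::nat)^k \<le> 2^(k+1) - 1"
  proof -
    have "(1::nat) \<le> 2^k" by simp
    then show ?thesis by simp
  qed
  then have "real ((2::nat)^k) \<le> real (2^(k+1) - 1)" by linarith
  then show ?thesis by (simp add: card_Tset)
qed

lemma q8_le: "((2::real)^(k div 8))^8 \<le> 2^k"
proof -
  have "((2::real)^(k div 8))^8 = 2^(k div 8 * 8)" by (simp add: power_mult)
  also have "\<dots> \<le> 2^k" by (intro power_increasing) auto
  finally show ?thesis .
qed

context bar
begin

definition "Dc = s 0 + s 1 + Cm * s 0 + Cm * s 1 + (1 + Cm) + s 0 + Cm * s 0 + 4 / mu^2"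

lemma bad_bound:
  fixes k :: nat and \<delta> :: real
  defines "q \<equiv> (2::real)^(k div 8)"
  assumes d: "\<delta> > 0" and qb: "q \<ge> (16 + 8 * \<bar>b0\<bar>) / mu" and qd: "q \<ge> (96 / mu + 2) / \<delta>"
  shows "measure M {\<omega>\<in>space M. norm (hat_theta (k+1) (\<lambda>i. X i \<omega>) - (a0, b0, a1, b1)) > \<delta>} \<le> Dc / q"
proof -
  define T where "T = Tset (k+1)"
  define T' where "T' = Tset k"
  define n where "n = real (card T)"
  define n' where "n' = real (card T')"
  define u where "u = 1 / q^3"
  define L where "L = q"
  have q1: "q \<ge> 1" by (simp add: q_def)
  have q0: "q > 0" using q1 by simp
  have u0: "u > 0" using q0 by (simp add: u_def)
  have n'8: "n' \<ge> q^8" unfolding n'_def T'_def q_def by (rule order_trans[OF q8_le card_Tset_ge])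
  have n8: "n \<ge> q^8"
  proof -
    have "(2::real)^k \<le> 2^(k+1)" by (intro power_increasing) auto
    then show ?thesis unfolding n_def T_def q_def using q8_le[of k] card_Tset_ge[of "k+1"] by linarith
  qed
  have n0: "n > 0" and n'0: "n' > 0" using n8 n'8 q0 by (smt (verit) zero_less_power)+
  have finT: "finite T" "finite T'" by (simp_all add: T_def T'_def Tset_fin)
  have posT: "\<And>i. i \<in> T \<Longrightarrow> i \<ge> 1" "\<And>i. i \<in> T' \<Longrightarrow> i \<ge> 1" unfolding T_def T'_def by (auto simp: Tset_def)
  define B1a where "B1a = {\<omega>\<in>space M. u * n \<le> \<bar>\<Sum>i\<in>T. eps (2*i+0) \<omega>\<bar>}"
  define B1b where "B1b = {\<omega>\<in>space M. u * n \<le> \<bar>\<Sum>i\<in>T. eps (2*i+1) \<omega>\<bar>}"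
  define B2a where "B2a = {\<omega>\<in>space M. u * n \<le> \<bar>\<Sum>i\<in>T. X i \<omega> * eps (2*i+0) \<omega>\<bar>}"
  define B2b where "B2b = {\<omega>\<in>space M. u * n \<le> \<bar>\<Sum>i\<in>T. X i \<omega> * eps (2*i+1) \<omega>\<bar>}"
  define B3 where "B3 = {\<omega>\<in>space M. L * n \<le> \<bar>\<Sum>i\<in>T. X i \<omega>\<bar>}"
  define B4 where "B4 = {\<omega>\<in>space M. u * n' \<le> \<bar>\<Sum>i\<in>T'. eps (2*i+0) \<omega>\<bar>}"
  define B5 where "B5 = {\<omega>\<in>space M. u * n' \<le> \<bar>\<Sum>i\<in>T'. X i \<omega> * eps (2*i+0) \<omega>\<bar>}"
  define B6 where "B6 = {\<omega>\<in>space M. mu / 2 * n' \<le> \<bar>\<Sum>i\<in>T'. tr (Y i \<omega>) - mu\<bar>}"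
  have sub: "{\<omega>\<in>space M. norm (hat_theta (k+1) (\<lambda>i. X i \<omega>) - (a0, b0, a1, b1)) > \<delta>}
      \<subseteq> B1a \<union> B1b \<union> B2a \<union> B2b \<union> B3 \<union> B4 \<union> B5 \<union> B6"
  proof (rule subsetI, rule ccontr)
    fix \<omega> assume w: "\<omega> \<in> {\<omega>\<in>space M. norm (hat_theta (k+1) (\<lambda>i. X i \<omega>) - (a0, b0, a1, b1)) > \<delta>}"
      and nw: "\<omega> \<notin> B1a \<union> B1b \<union> B2a \<union> B2b \<union> B3 \<union> B4 \<union> B5 \<union> B6"
    have sp: "\<omega> \<in> space M" using w by simp
    have d0: "X (2*i) \<omega> - a0 * X i \<omega> - b0 = eps (2*i+0) \<omega>" if "i \<ge> 1" for i
      using rec0[OF that] sp by simp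
    have d1: "X (2*i+1) \<omega> - a1 * X i \<omega> - b1 = eps (2*i+1) \<omega>" if "i \<ge> 1" for i
      using rec1[OF that] sp by simp
    have sT0: "(\<Sum>i\<in>T. X (2*i) \<omega> - a0 * X i \<omega> - b0) = (\<Sum>i\<in>T. eps (2*i+0) \<omega>)"
      using d0 posT by (intro sum.cong) auto
    have sT1: "(\<Sum>i\<in>T. X (2*i+1) \<omega> - a1 * X i \<omega> - b1) = (\<Sum>i\<in>T. eps (2*i+1) \<omega>)"
      using d1 posT by (intro sum.cong) auto
    have pT0: "(\<Sum>i\<in>T. X i \<omega> * (X (2*i) \<omega> - a0 * X i \<omega> - b0)) = (\<Sum>i\<in>T. X i \<omega> * eps (2*i+0) \<omega>)"
      using d0 posT by (intro sum.cong) auto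
    have pT1: "(\<Sum>i\<in>T. X i \<omega> * (X (2*i+1) \<omega> - a1 * X i \<omega> - b1)) = (\<Sum>i\<in>T. X i \<omega> * eps (2*i+1) \<omega>)"
      using d1 posT by (intro sum.cong) auto
    have sT'0: "(\<Sum>i\<in>T'. X (2*i) \<omega> - a0 * X i \<omega> - b0) = (\<Sum>i\<in>T'. eps (2*i+0) \<omega>)"
      using d0 posT by (intro sum.cong) auto
    have pT'0: "(\<Sum>i\<in>T'. X i \<omega> * (X (2*i) \<omega> - a0 * X i \<omega> - b0)) = (\<Sum>i\<in>T'. X i \<omega> * eps (2*i+0) \<omega>)"
      using d0 posT by (intro sum.cong) auto
    have yT': "(\<Sum>i\<in>T'. min ((X (2*i) \<omega> - a0 * X i \<omega> - b0)^2) 1) = (\<Sum>i\<in>T'. tr (Y i \<omega>))"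
      using d0 posT by (intro sum.cong) (auto simp: tr_def Yv_def)
    have Ysum: "(\<Sum>i\<in>T'. tr (Y i \<omega>)) > n' * mu / 2"
    proof -
      define ST where "ST = (\<Sum>i\<in>T'. tr (Y i \<omega>))"
      have a: "\<bar>\<Sum>i\<in>T'. tr (Y i \<omega>) - mu\<bar> < mu / 2 * n'" using nw sp by (auto simp: B6_def)
      have e: "(\<Sum>i\<in>T'. tr (Y i \<omega>) - mu) = ST - n' * mu"
        by (simp add: sum_subtractf n'_def ST_def)
      have "\<bar>ST - n' * mu\<bar> < mu / 2 * n'" using a unfolding e .
      then have "ST - n' * mu > - (mu / 2 * n')" by (smt (verit))
      moreover have "n' * mu / 2 = n' * mu - mu / 2 * n'" by (simp add: field_simps)
      ultimately show ?thesis unfolding ST_def[symmetric] by linarith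
    qed
    have cond: "2 * u + 2 * (\<bar>b0\<bar> + L) * u \<le> mu / 4"
      using arith2[OF q1 mu_pos qb] by (simp add: u_def L_def)
    have "norm (hat_theta (k+1) (\<lambda>i. X i \<omega>) - (a0, b0, a1, b1))
      \<le> 2 * ((u + L * u) / (mu / 12)) + 2 * (u + L * ((u + L * u) / (mu / 12)))"
      using D3[where x="\<lambda>i. X i \<omega>" and k=k and aa=a0 and bb=b0 and cc=a1 and dd=b1 and u=u and L=L and mu=mu,
          folded T_def T'_def, folded n_def n'_def] a0 mu_pos u0 cond nw sp Ysum
        sT0 sT1 pT0 pT1 sT'0 pT'0 yT'
      by (auto simp: B1a_def B1b_def B2a_def B2b_def B3_def B4_def B5_def not_le)
    also have "\<dots> \<le> \<delta>" using arith1[OF q1 mu_pos d qd] by (simp add: u_def L_def)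
    finally show False using w by simp
  qed
  have meas: "B1a \<in> sets M" "B1b \<in> sets M" "B2a \<in> sets M" "B2b \<in> sets M" "B3 \<in> sets M" "B4 \<in> sets M" "B5 \<in> sets M" "B6 \<in> sets M"
    unfolding B1a_def B1b_def B2a_def B2b_def B3_def B4_def B5_def B6_def by measurable
  have b1a: "measure M B1a \<le> s 0 / q"
    using P1[OF finT(1) posT(1), of 0 "u * n"] h1[OF q1 n8 s_nonneg[of 0]] u0 n0 by (simp add: B1a_def n_def u_def)
  have b1b: "measure M B1b \<le> s 1 / q"
    using P1[OF finT(1) posT(1), of 1 "u * n"] h1[OF q1 n8 s_nonneg[of 1]] u0 n0 by (simp add: B1b_def n_def u_def)
  have b2a: "measure M B2a \<le> Cm * s 0 / q"
    using P2[OF finT(1) posT(1), of 0 "u * n"] h1[OF q1 n8 mult_nonneg_nonneg[OF Cm_nonneg s_nonneg[of 0]]] u0 n0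
    by (simp add: B2a_def n_def u_def)
  have b2b: "measure M B2b \<le> Cm * s 1 / q"
    using P2[OF finT(1) posT(1), of 1 "u * n"] h1[OF q1 n8 mult_nonneg_nonneg[OF Cm_nonneg s_nonneg[of 1]]] u0 n0
    by (simp add: B2b_def n_def u_def)
  have b3: "measure M B3 \<le> (1 + Cm) / q"
  proof -
    have "measure M B3 \<le> n * (1 + Cm) / (L * n)"
      using P4[OF finT(1) posT(1), of "L * n"] q0 n0 by (simp add: B3_def n_def L_def)
    also have "\<dots> = (1 + Cm) / q" using n0 by (simp add: L_def)
    finally show ?thesis .
  qed
  have b4: "measure M B4 \<le> s 0 / q"
    using P1[OF finT(2) posT(2), of 0 "u * n'"] h1[OF q1 n'8 s_nonneg[of 0]] u0 n'0 by (simp add: B4_def n'_def u_def)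
  have b5: "measure M B5 \<le> Cm * s 0 / q"
    using P2[OF finT(2) posT(2), of 0 "u * n'"] h1[OF q1 n'8 mult_nonneg_nonneg[OF Cm_nonneg s_nonneg[of 0]]] u0 n'0
    by (simp add: B5_def n'_def u_def)
  have b6: "measure M B6 \<le> 4 / mu^2 / q"
  proof -
    have "measure M B6 \<le> n' / (mu / 2 * n')^2"
      using P3[OF finT(2) posT(2), of "mu / 2 * n'"] mu_pos n'0 by (simp add: B6_def n'_def)
    also have "\<dots> = 4 / mu^2 / n'" using n'0 mu_pos by (simp add: field_simps power2_eq_square)
    also have "\<dots> \<le> 4 / mu^2 / q"
    proof (intro divide_left_mono)
      have "q^1 \<le> q^8" using q1 by (intro power_increasing) auto
      then show "q \<le> n'" using n'8 by simp
    qed (use q0 mu_pos n'0 in auto)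
    finally show ?thesis .
  qed
  have "measure M {\<omega>\<in>space M. norm (hat_theta (k+1) (\<lambda>i. X i \<omega>) - (a0, b0, a1, b1)) > \<delta>}
      \<le> measure M (B1a \<union> B1b \<union> B2a \<union> B2b \<union> B3 \<union> B4 \<union> B5 \<union> B6)"
    using meas sub by (intro finite_measure_mono) auto
  also have "\<dots> \<le> s 0 / q + s 1 / q + Cm * s 0 / q + Cm * s 1 / q + (1 + Cm) / q + s 0 / q + Cm * s 0 / q + 4 / mu^2 / q"
    using meas b1a b1b b2a b2b b3 b4 b5 b6 by (intro meas_Un2 sets.Un) auto
  also have "\<dots> = Dc / q" by (simp add: Dc_def add_divide_distrib)
  finally show ?thesis .
qed

end


lemma div8_ge: "8 * real (k div 8) \<ge> real k - 7"
proof -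
  have "k = 8 * (k div 8) + k mod 8" by simp
  moreover have "k mod 8 < 8" by simp
  ultimately have "k \<le> 8 * (k div 8) + 7" by linarith
  then have "real k \<le> real (8 * (k div 8) + 7)" by (simp only: of_nat_le_iff)
  then show ?thesis by simp
qed

lemma card_Tset_le: "real (card (Tset r)) \<le> 2^(r+1)"
  by (simp add: card_Tset of_nat_diff)

lemma card_Tset_ge_r: "card (Tset r) \<ge> r + 1"
proof -
  have "r + 1 < 2^(r+1)" by (rule less_exp)
  then show ?thesis by (simp add: card_Tset)
qed

lemma log_bound:
  fixes P Dc :: real and k :: nat
  assumes P: "P > 0" and Dc: "Dc > 0" and Pb: "P \<le> Dc / 2^(k div 8)"
  shows "ln P \<le> ln Dc + 9/8 * ln 2 - ln (real (card (Tset (k+1)))) / 8"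
proof -
  have "ln P \<le> ln (Dc / 2^(k div 8))" using P Pb by simp
  also have "\<dots> = ln Dc - real (k div 8) * ln 2" using Dc by (simp add: ln_div ln_realpow)
  finally have a: "ln P \<le> ln Dc - real (k div 8) * ln 2" .
  have N1: "real (card (Tset (k+1))) \<ge> 1" using card_Tset_pos[of "k+1"] by simp
  have "ln (real (card (Tset (k+1)))) \<le> ln (2^(k+2))"
    using card_Tset_le[of "k+1"] N1 by (simp add: numeral_eq_Suc)
  also have "\<dots> = real (k+2) * ln 2" by (rule ln_realpow)
  finally have b: "ln (real (card (Tset (k+1)))) \<le> (real k + 2) * ln 2" by (simp add: algebra_simps)
  have l2: "ln (2::real) > 0" by simp
  have c: "real (k div 8) * ln 2 \<ge> (real k - 7) / 8 * ln 2"
    using div8_ge[of k] l2 by (intro mult_right_mono) auto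
  have e: "(real k - 7) / 8 * ln 2 = (real k + 2) * ln 2 / 8 - 9/8 * ln 2" by (simp add: field_simps)
  have b8: "ln (real (card (Tset (k+1)))) / 8 \<le> (real k + 2) * ln 2 / 8" using b by simp
  show ?thesis using a c e b8 by linarith
qed

context bar
begin

lemma Dc_pos: "Dc > 0"
proof -
  have "0 \<le> s 0" "0 \<le> s 1" using s_nonneg by auto
  moreover have "0 \<le> Cm" by (rule Cm_nonneg)
  moreover have "0 \<le> 4 / mu^2" by simp
  moreover have "0 \<le> Cm * s 0" "0 \<le> Cm * s 1" using s_nonneg Cm_nonneg by auto
  ultimately show ?thesis unfolding Dc_def by linarith
qed

lemma final:
  fixes b :: "nat \<Rightarrow> real" and \<delta> :: real
  assumes bpos: "\<And>n. b n > 0"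
    and H1: "filterlim (\<lambda>n. b n / sqrt (real n)) at_top sequentially"
    and H2: "(\<lambda>n. b n / sqrt (real n * ln (real n))) \<longlonglongrightarrow> 0"
    and d: "\<delta> > 0"
  shows "limsup (\<lambda>r. ereal (real (card (Tset r)) / (b (card (Tset r)))^2)
            * eln (measure M {\<omega>\<in>space M.
                 norm (hat_theta r (\<lambda>i. X i \<omega>) - (a0, b0, a1, b1)) > \<delta>})) = -\<infinity>"
proof (rule ereal_bot)
  fix B :: real
  define K where "K = - B"
  define N where "N = (\<lambda>r. card (Tset r))"
  define Pr where "Pr = (\<lambda>r. measure M {\<omega>\<in>space M. norm (hat_theta r (\<lambda>i. X i \<omega>) - (a0, b0, a1, b1)) > \<delta>})"
  define D' where "D' = ln Dc + 9/8 * ln 2"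
  define c where "c = 8 * (\<bar>K\<bar> + \<bar>D'\<bar>) + 8"
  have c0: "c > 0" by (simp add: c_def add_pos_nonneg)
  define Qth where "Qth = max ((16 + 8 * \<bar>b0\<bar>) / mu) ((96 / mu + 2) / \<delta>)"
  define K0 where "K0 = 8 * nat \<lceil>Qth\<rceil>"
  have thr: "(2::real)^(k div 8) \<ge> Qth" if "k \<ge> K0" for k
  proof -
    have "nat \<lceil>Qth\<rceil> * 8 \<le> k" using that by (simp add: K0_def)
    then have "nat \<lceil>Qth\<rceil> \<le> k div 8" using less_eq_div_iff_mult_less_eq[of 8 "nat \<lceil>Qth\<rceil>" k] by linarith
    then have "real (nat \<lceil>Qth\<rceil>) \<le> real (k div 8)" by simp
    moreover have "real (k div 8) \<le> 2^(k div 8)"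
    proof -
      have "k div 8 < 2^(k div 8)" by (rule less_exp)
      then have "real (k div 8) < real ((2::nat)^(k div 8))" by (simp only: of_nat_less_iff)
      then show ?thesis by simp
    qed
    moreover have "Qth \<le> real (nat \<lceil>Qth\<rceil>)" by linarith
    ultimately show ?thesis by linarith
  qed
  have Pbound: "Pr (k+1) \<le> Dc / 2^(k div 8)" if "k \<ge> K0" for k
    unfolding Pr_def
    by (rule bad_bound[OF d]) (use thr[OF that] in \<open>auto simp: Qth_def\<close>)
  obtain M1 where M1: "\<And>n. n \<ge> M1 \<Longrightarrow> b n / sqrt (real n) \<ge> 1"
    using H1[unfolded filterlim_at_top] by (auto simp: eventually_sequentially)
  have sc: "1 / sqrt c > 0" using c0 by simp
  have "eventually (\<lambda>n. dist (b n / sqrt (real n * ln (real n))) 0 < 1 / sqrt c) sequentially"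
    by (rule tendstoD[OF H2 sc])
  then obtain M2 where M2: "\<And>n. n \<ge> M2 \<Longrightarrow> \<bar>b n / sqrt (real n * ln (real n))\<bar> < 1 / sqrt c"
    by (auto simp: eventually_sequentially dist_real_def)
  have ev: "\<forall>r\<ge>K0 + M1 + M2 + 3. ereal (real (N r) / (b (N r))^2) * eln (Pr r) \<le> ereal (- K)"
  proof (intro allI impI)
    fix r assume r: "r \<ge> K0 + M1 + M2 + 3"
    define k where "k = r - 1"
    have rk: "r = k + 1" using r by (simp add: k_def)
    have kK: "k \<ge> K0" using r by (simp add: k_def)
    define n where "n = N r"
    have nge: "n \<ge> r + 1" using card_Tset_ge_r[of r] by (simp add: n_def N_def)
    have n2: "real n \<ge> 3" using nge r by simp
    have bn: "b n > 0" by (rule bpos)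
    have lnn: "ln (real n) > 0" using n2 by simp
    have A1: "real n / (b n)^2 \<le> 1"
    proof -
      have "n \<ge> M1" using nge r by linarith
      then have "b n / sqrt (real n) \<ge> 1" by (rule M1)
      then have "sqrt (real n) \<le> b n" using n2 by (simp add: le_divide_eq)
      then have "(sqrt (real n))^2 \<le> (b n)^2" by (rule power_mono) simp
      then show ?thesis using n2 bn by simp
    qed
    have A0: "real n / (b n)^2 \<ge> 0" using n2 by simp
    have A2: "real n * ln (real n) / (b n)^2 \<ge> c"
    proof -
      have pos: "real n * ln (real n) > 0" using n2 lnn by simp
      have "n \<ge> M2" using nge r by linarith
      then have "\<bar>b n / sqrt (real n * ln (real n))\<bar> < 1 / sqrt c" by (rule M2)
      then have "b n / sqrt (real n * ln (real n)) < 1 / sqrt c" using bn pos by simp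
      then have "b n * sqrt c < sqrt (real n * ln (real n))" using pos c0 by (simp add: field_simps)
      then have "(b n * sqrt c)^2 < (sqrt (real n * ln (real n)))^2"
        using bn c0 by (intro power_strict_mono) auto
      then have "(b n)^2 * c < real n * ln (real n)" using pos c0 by (simp add: power_mult_distrib)
      then show ?thesis using bn by (simp add: le_divide_eq mult.commute less_imp_le)
    qed
    show "ereal (real (N r) / (b (N r))^2) * eln (Pr r) \<le> ereal (- K)"
    proof (cases "Pr r = 0")
      case True
      define x where "x = real (N r) / (b (N r))^2"
      have "x > 0" using n2 bn by (simp add: n_def x_def)
      then have "ereal x * (-\<infinity>) = -\<infinity>" by simp
      moreover have "eln (Pr r) = -\<infinity>" using True by (simp add: eln_def)
      ultimately show ?thesis by (simp add: x_def[symmetric])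
    next
      case False
      then have P0: "Pr r > 0" unfolding Pr_def using measure_nonneg[of M] by (simp add: less_le)
      have lp: "ln (Pr r) \<le> D' - ln (real n) / 8"
        using log_bound[OF P0 Dc_pos Pbound[OF kK, folded rk]] by (simp add: D'_def n_def N_def rk)
      have "real n / (b n)^2 * ln (Pr r) \<le> real n / (b n)^2 * (D' - ln (real n) / 8)"
        using lp A0 by (rule mult_left_mono)
      also have "\<dots> = real n / (b n)^2 * D' - (real n * ln (real n) / (b n)^2) / 8" using bn by (simp add: field_simps)
      also have "\<dots> \<le> \<bar>D'\<bar> - c / 8"
      proof -
        have "real n / (b n)^2 * D' \<le> real n / (b n)^2 * \<bar>D'\<bar>"
          using A0 by (intro mult_left_mono) auto
        also have "\<dots> \<le> 1 * \<bar>D'\<bar>" using A1 by (intro mult_right_mono) auto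
        finally have "real n / (b n)^2 * D' \<le> 1 * \<bar>D'\<bar>" .
        then show ?thesis using A2 by simp
      qed
      also have "\<dots> \<le> - K"
      proof -
        have "c / 8 = \<bar>K\<bar> + \<bar>D'\<bar> + 1" by (simp add: c_def)
        then show ?thesis using abs_ge_self[of K] by linarith
      qed
      finally have "real n / (b n)^2 * ln (Pr r) \<le> - K" .
      then show ?thesis using False by (simp add: eln_def n_def)
    qed
  qed
  have "limsup (\<lambda>r. ereal (real (N r) / (b (N r))^2) * eln (Pr r)) \<le> ereal (- K)"
    by (rule Limsup_bounded) (use ev in \<open>auto simp: eventually_sequentially\<close>)
  then show "limsup (\<lambda>r. ereal (real (card (Tset r)) / (b (card (Tset r)))^2)
            * eln (measure M {\<omega>\<in>space M.
                 norm (hat_theta r (\<lambda>i. X i \<omega>) - (a0, b0, a1, b1)) > \<delta>})) \<le> ereal B"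
    by (simp add: N_def Pr_def K_def)
qed

end

theorem proposition4p2:
  fixes M :: "'a measure"
    and X eps :: "nat \<Rightarrow> 'a \<Rightarrow> real"
    and alpha0 beta0 alpha1 beta1 sigma rho :: real
    and b :: "nat \<Rightarrow> real"
  assumes "prob_space M"
    and "\<And>n. X n \<in> borel_measurable M"
    and "\<And>n. eps n \<in> borel_measurable M"
    and "\<And>k::nat. integrable M (\<lambda>\<omega>. (X 1 \<omega>) ^ k)"
    and "\<bar>alpha0\<bar> < 1" and "\<bar>alpha1\<bar> < 1"
    and "sigma > 0" and "\<bar>rho\<bar> < 1"
    and "\<And>n. n \<ge> 1 \<Longrightarrow> \<forall>\<omega>\<in>space M. X (2*n) \<omega> = alpha0 * X n \<omega> + beta0 + eps (2*n) \<omega>"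
    and "\<And>n. n \<ge> 1 \<Longrightarrow> \<forall>\<omega>\<in>space M. X (2*n+1) \<omega> = alpha1 * X n \<omega> + beta1 + eps (2*n+1) \<omega>"
    and "\<And>n. n \<ge> 1 \<Longrightarrow> distributed M lborel (\<lambda>\<omega>. (eps (2*n) \<omega>, eps (2*n+1) \<omega>))
                 (\<lambda>p. ennreal (binormal_density (sigma^2) rho p))"
    and "prob_space.indep_vars M (\<lambda>_. lborel)
           (\<lambda>n \<omega>. if n = 0 then (X 1 \<omega>, 0) else (eps (2*n) \<omega>, eps (2*n+1) \<omega>)) UNIV"
    and "mono b" and "\<And>n. b n > 0"
    and "filterlim (\<lambda>n. b n / sqrt (real n)) at_top sequentially"
    and "(\<lambda>n. b n / sqrt (real n * ln (real n))) \<longlonglongrightarrow> 0"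
    and "delta > 0"
  shows "limsup (\<lambda>r. ereal (real (card (Tset r)) / (b (card (Tset r)))^2)
            * eln (measure M {\<omega>\<in>space M.
                 norm (hat_theta r (\<lambda>i. X i \<omega>) - (alpha0, beta0, alpha1, beta1)) > delta}))
         = -\<infinity>"
proof -
  have ind: "prob_space.indep_vars M (\<lambda>_. lborel) (Yv X eps) UNIV"
  proof -
    have "Yv X eps = (\<lambda>n \<omega>. if n = 0 then (X 1 \<omega>, 0) else (eps (2*n) \<omega>, eps (2*n+1) \<omega>))"
      by (intro ext) (simp add: Yv_def)
    then show ?thesis using assms(12) by simp
  qed
  interpret bar M X eps alpha0 beta0 alpha1 beta1 sigma rho
    by (rule bar.intro[OF assms(1)], unfold_locales) (use assms ind in auto)
  show ?thesis by (rule final) (use assms in auto)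
qed

end
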